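(* Let $\mathcal G$ be a tree on $n\ge2$ nodes, with oriented incidence matrix $D_\tau\in\mathbb R^{n\times(n-1)}$, edge-weight matrix $W=\mathrm{diag}(w_1,\dots,w_{n-1})$, $w_l>0$, and time-scale matrix $E=\mathrm{diag}(\epsilon_1,\dots,\epsilon_n)$, $\epsilon_i>0$; let $L_{e,s}^\tau=D_\tau^TE^{-1}D_\tau$ and $\sigma_w,\sigma_v$ real scalars. Consider $$\tilde\Sigma_\tau(s)=\big(sI+L_{e,s}^\tau W\big)^{-1}\begin{bmatrix}\sigma_wD_\tau^TE^{-1/2} & -\sigma_vL_{e,s}^\tau W^{1/2}\end{bmatrix}.$$ Then $L\le\|\tilde\Sigma_\tau\|_\infty^2\le U$, where $L=\max\{L_1,L_2\}$ and $$L_1=\frac{\sigma_w^2+\sigma_v^2\lambda_{\min}(L_{e,s}^\tau)\lambda_{\max}(W^{1/2})^2}{\lambda_{\min}(L_{e,s}^\tau)\lambda_{\max}(W^{1/2})^4},$$ $$L_2=\frac{\sigma_w^2+\sigma_v^2\lambda_{\max}(L_{e,s}^\tau)\lambda_{\max}(W^{1/2})\lambda_{\min}(W^{1/2})}{\lambda_{\max}(L_{e,s}^\tau)\lambda_{\max}(W^{1/2})^3\lambda_{\min}(W^{1/2})},$$ $$U=\frac{\sigma_w^2+\sigma_v^2\lambda_{\min}(L_{e,s}^\tau)\lambda_{\min}(W^{1/2})^2}{\lambda_{\min}(L_{e,s}^\tau)\lambda_{\min}(W^{1/2})^4}.$$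
   Context: The incidence matrix of a graph with an arbitrary orientation of each edge has entry $1$ in row $i$, column $l$ if node $i$ is the initial node of edge $l$, $-1$ if it is the terminal node, and $0$ otherwise. Powers of positive diagonal matrices are taken entrywise. $\lambda_{\max},\lambda_{\min}$ denote the largest and smallest eigenvalues of a symmetric matrix. For a stable transfer matrix $\Phi(s)$, $\|\Phi\|_\infty=\sup_{\omega\in\mathbb R}\bar\sigma(\Phi(j\omega))$ where $\bar\sigma$ is the largest singular value. *)

theory Defs
  imports "Jordan_Normal_Form.Schur_Decomposition" "Jordan_Normal_Form.Gauss_Jordan_Elimination"
begin

text \<open>A graph on nodes 0..n-1 with m edges, edge l oriented from fst (e l) to snd (e l).\<close>

definition edge_rel :: "nat \<Rightarrow> (nat \<Rightarrow> nat \<times> nat) \<Rightarrow> (nat \<times> nat) set" where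
  "edge_rel m e = {(a, b). \<exists>l<m. e l = (a, b) \<or> e l = (b, a)}"

text \<open>A tree on n nodes: n-1 edges without self-loops between nodes 0..n-1, and connected
  (connected with n-1 edges on n nodes is equivalent to being a tree).\<close>
definition is_tree :: "nat \<Rightarrow> (nat \<Rightarrow> nat \<times> nat) \<Rightarrow> bool" where
  "is_tree n e \<longleftrightarrow>
     (\<forall>l < n - 1. fst (e l) < n \<and> snd (e l) < n \<and> fst (e l) \<noteq> snd (e l)) \<and>
     (\<forall>i < n. (0, i) \<in> (edge_rel (n - 1) e)\<^sup>*)"

definition incidence_mat :: "nat \<Rightarrow> nat \<Rightarrow> (nat \<Rightarrow> nat \<times> nat) \<Rightarrow> real mat" where
  "incidence_mat n m e = Matrix.mat n m (\<lambda>(i, l).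
      if i = fst (e l) then 1 else if i = snd (e l) then -1 else 0)"

definition lambda_max :: "real mat \<Rightarrow> real" where
  "lambda_max A = Max {k. eigenvalue A k}"

definition lambda_min :: "real mat \<Rightarrow> real" where
  "lambda_min A = Min {k. eigenvalue A k}"

definition sigma_max :: "complex mat \<Rightarrow> real" where
  "sigma_max M = sqrt (Max {x::real. eigenvalue (mat_adjoint M * M) (complex_of_real x)})"

definition mat_inv :: "'a::field mat \<Rightarrow> 'a mat" where
  "mat_inv A = the (mat_inverse A)"

definition append_cols :: "'a::zero mat \<Rightarrow> 'a mat \<Rightarrow> 'a mat" where
  "append_cols A B = Matrix.mat (dim_row A) (dim_col A + dim_col B)
     (\<lambda>(i, j). if j < dim_col A then A $$ (i, j) else B $$ (i, j - dim_col A))"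

definition hinf_norm :: "(complex \<Rightarrow> complex mat) \<Rightarrow> real" where
  "hinf_norm Phi = (SUP \<omega>::real. sigma_max (Phi (\<i> * complex_of_real \<omega>)))"

definition Sigma_tilde ::
  "nat \<Rightarrow> (nat \<Rightarrow> nat \<times> nat) \<Rightarrow> (nat \<Rightarrow> real) \<Rightarrow> (nat \<Rightarrow> real) \<Rightarrow> real \<Rightarrow> real
   \<Rightarrow> complex \<Rightarrow> complex mat" where
  "Sigma_tilde n e w \<epsilon> \<sigma>w \<sigma>v s =
    (let D = incidence_mat n (n - 1) e;
         W = mat_diag (n - 1) w;
         Wh = mat_diag (n - 1) (\<lambda>l. sqrt (w l));
         Einv = mat_diag n (\<lambda>i. 1 / \<epsilon> i);
         Einvh = mat_diag n (\<lambda>i. 1 / sqrt (\<epsilon> i));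
         Les = transpose_mat D * Einv * D;
         B = append_cols (\<sigma>w \<cdot>\<^sub>m (transpose_mat D * Einvh)) ((- \<sigma>v) \<cdot>\<^sub>m (Les * Wh));
         C = map_mat complex_of_real
     in mat_inv (s \<cdot>\<^sub>m 1\<^sub>m (n - 1) + C (Les * W)) * C B)"

end

theory Submission
  imports Defs "HOL-Computational_Algebra.Fundamental_Theorem_Algebra"
begin


lemma sp_self_ge0: fixes v :: "real vec" shows "0 \<le> v \<bullet> v"
  unfolding scalar_prod_def by (intro sum_nonneg) auto

lemma sp_self_eq0: fixes v :: "real vec" assumes "v \<in> carrier_vec k" "v \<bullet> v = 0"
  shows "v = 0\<^sub>v k"
  using conjugate_square_eq_0_vec[OF assms(1)] assms(2) by simp

lemma sp_self_gt0: fixes v :: "real vec" assumes "v \<in> carrier_vec k" "v \<noteq> 0\<^sub>v k"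
  shows "0 < v \<bullet> v"
  using sp_self_ge0[of v] sp_self_eq0[OF assms(1)] assms(2) by force

lemma discr_le:
  fixes p q r :: real
  assumes h: "\<And>t. 0 \<le> p + 2*q*t + r*t^2"
  shows "q^2 \<le> p*r"
proof -
  have p: "0 \<le> p" using h[of 0] by simp
  show ?thesis
  proof (cases "r = 0")
    case True
    have "q = 0"
    proof (rule ccontr)
      assume q: "q \<noteq> 0"
      have "0 \<le> p + 2*q*(-(p+1)/(2*q)) + r*(-(p+1)/(2*q))^2" by (rule h)
      also have "\<dots> = -1" using q True by (simp add: field_simps)
      finally show False by simp
    qed
    then show ?thesis using True by simp
  next
    case False
    have r: "r > 0"
    proof (rule ccontr)
      assume "\<not> r > 0" then have rn: "r < 0" using False by simp
      define t where "t = sqrt ((p+1)/(-r))"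
      have t2: "t^2 = (p+1)/(-r)" unfolding t_def using rn p by (intro real_sqrt_pow2) (simp add: divide_nonneg_neg)
      have "0 \<le> p + 2*q*t + r*t^2" "0 \<le> p + 2*q*(-t) + r*(-t)^2" by (rule h)+
      then have "0 \<le> 2*p + 2*r*t^2" by simp
      moreover have "r*t^2 = -(p+1)" using t2 rn by (simp add: field_simps)
      ultimately show False by linarith
    qed
    have "0 \<le> p + 2*q*(-q/r) + r*(-q/r)^2" by (rule h)
    also have "\<dots> = p - q^2/r" using False by (simp add: field_simps power2_eq_square)
    finally show ?thesis using r by (simp add: field_simps)
  qed
qed

lemma sym_sp:
  fixes A :: "real mat"
  assumes A: "A \<in> carrier_mat k k" and sym: "A\<^sup>T = A" and x: "x \<in> carrier_vec k" and y: "y \<in> carrier_vec k"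
  shows "y \<bullet> (A *\<^sub>v x) = x \<bullet> (A *\<^sub>v y)"
proof -
  have "y \<bullet> (A *\<^sub>v x) = (A\<^sup>T *\<^sub>v y) \<bullet> x" using transpose_vec_mult_scalar[OF A x y] by simp
  also have "\<dots> = x \<bullet> (A *\<^sub>v y)" using sym A y x by (simp add: comm_scalar_prod[of _ k])
  finally show ?thesis .
qed

lemma quad_expand:
  fixes A :: "real mat"
  assumes A: "A \<in> carrier_mat k k" and sym: "A\<^sup>T = A" and x: "x \<in> carrier_vec k" and y: "y \<in> carrier_vec k"
  shows "(x + t \<cdot>\<^sub>v y) \<bullet> (A *\<^sub>v (x + t \<cdot>\<^sub>v y))
     = x \<bullet> (A *\<^sub>v x) + 2 * (x \<bullet> (A *\<^sub>v y)) * t + (y \<bullet> (A *\<^sub>v y)) * t^2"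
proof -
  have Ax: "A *\<^sub>v x \<in> carrier_vec k" and Ay: "A *\<^sub>v y \<in> carrier_vec k" using A x y by auto
  have "A *\<^sub>v (x + t \<cdot>\<^sub>v y) = A *\<^sub>v x + t \<cdot>\<^sub>v (A *\<^sub>v y)"
    using A x y by (simp add: mult_add_distrib_mat_vec mult_mat_vec)
  then have "(x + t \<cdot>\<^sub>v y) \<bullet> (A *\<^sub>v (x + t \<cdot>\<^sub>v y))
      = x \<bullet> (A *\<^sub>v x) + t * (x \<bullet> (A *\<^sub>v y)) + t * (y \<bullet> (A *\<^sub>v x)) + t * t * (y \<bullet> (A *\<^sub>v y))"
    using Ax Ay x y
    by (simp add: add_scalar_prod_distrib[of _ k] scalar_prod_add_distrib[of _ k]
        smult_scalar_prod_distrib[of _ k] scalar_prod_smult_distrib[of _ k] algebra_simps)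
  also have "y \<bullet> (A *\<^sub>v x) = x \<bullet> (A *\<^sub>v y)" by (rule sym_sp[OF A sym x y])
  finally show ?thesis by (simp add: power2_eq_square algebra_simps)
qed

lemma semi_cs:
  fixes A :: "real mat"
  assumes A: "A \<in> carrier_mat k k" and sym: "A\<^sup>T = A"
    and psd: "\<And>z. z \<in> carrier_vec k \<Longrightarrow> 0 \<le> z \<bullet> (A *\<^sub>v z)"
    and x: "x \<in> carrier_vec k" and y: "y \<in> carrier_vec k"
  shows "(x \<bullet> (A *\<^sub>v y))^2 \<le> (x \<bullet> (A *\<^sub>v x)) * (y \<bullet> (A *\<^sub>v y))"
proof (rule discr_le)
  fix t :: real
  have "0 \<le> (x + t \<cdot>\<^sub>v y) \<bullet> (A *\<^sub>v (x + t \<cdot>\<^sub>v y))" using x y by (intro psd) auto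
  then show "0 \<le> x \<bullet> (A *\<^sub>v x) + 2 * (x \<bullet> (A *\<^sub>v y)) * t + (y \<bullet> (A *\<^sub>v y)) * t^2"
    using quad_expand[OF A sym x y] by simp
qed

lemma cs_vec:
  fixes x y :: "real vec"
  assumes x: "x \<in> carrier_vec k" and y: "y \<in> carrier_vec k"
  shows "(x \<bullet> y)^2 \<le> (x \<bullet> x) * (y \<bullet> y)"
  using semi_cs[of "1\<^sub>m k" k x y] x y sp_self_ge0 by simp

lemma comp_sq_le:
  fixes y :: "real vec"
  assumes "y \<in> carrier_vec k" "i < k"
  shows "(y $ i)^2 \<le> y \<bullet> y"
proof -
  have "(y $ i)^2 = y $ i * y $ i" by (simp add: power2_eq_square)
  also have "\<dots> \<le> (\<Sum>j = 0..<k. y $ j * y $ j)"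
    using assms by (intro member_le_sum) auto
  finally show ?thesis using assms unfolding scalar_prod_def by simp
qed

lemma comp_abs_le:
  fixes y :: "real vec"
  assumes "y \<in> carrier_vec k" "i < k"
  shows "\<bar>y $ i\<bar> \<le> sqrt (y \<bullet> y)"
  using real_sqrt_le_mono[OF comp_sq_le[OF assms]] by simp

lemma comp_prod_le:
  fixes y :: "real vec"
  assumes "y \<in> carrier_vec k" "i < k" "j < k"
  shows "\<bar>y $ i\<bar> * \<bar>y $ j\<bar> \<le> y \<bullet> y"
proof -
  have "\<bar>y $ i\<bar> * \<bar>y $ j\<bar> \<le> sqrt (y \<bullet> y) * sqrt (y \<bullet> y)"
    using comp_abs_le[OF assms(1,2)] comp_abs_le[OF assms(1,3)] sp_self_ge0[of y] by (intro mult_mono) auto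
  also have "\<dots> = y \<bullet> y" using sp_self_ge0[of y] by simp
  finally show ?thesis .
qed

lemma quad_form_sum:
  fixes A :: "real mat"
  assumes A: "A \<in> carrier_mat k k" and y: "y \<in> carrier_vec k"
  shows "y \<bullet> (A *\<^sub>v y) = (\<Sum>i<k. \<Sum>j<k. y $ i * A $$ (i,j) * y $ j)"
  using A y unfolding scalar_prod_def mult_mat_vec_def
  by (auto simp: scalar_prod_def sum_distrib_left atLeast0LessThan algebra_simps intro!: sum.cong)

lemma quad_form_bound:
  fixes A :: "real mat"
  assumes A: "A \<in> carrier_mat k k" and y: "y \<in> carrier_vec k"
  shows "\<bar>y \<bullet> (A *\<^sub>v y)\<bar> \<le> (\<Sum>i<k. \<Sum>j<k. \<bar>A $$ (i,j)\<bar>) * (y \<bullet> y)"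
proof -
  have "\<bar>y \<bullet> (A *\<^sub>v y)\<bar> \<le> (\<Sum>i<k. \<Sum>j<k. \<bar>y $ i * A $$ (i,j) * y $ j\<bar>)"
    unfolding quad_form_sum[OF A y]
    by (rule order_trans[OF sum_abs]) (intro sum_mono sum_abs)
  also have "\<dots> \<le> (\<Sum>i<k. \<Sum>j<k. \<bar>A $$ (i,j)\<bar> * (y \<bullet> y))"
  proof (intro sum_mono)
    fix i j assume "i \<in> {..<k}" "j \<in> {..<k}"
    then have "\<bar>y $ i\<bar> * \<bar>y $ j\<bar> \<le> y \<bullet> y" using comp_prod_le[OF y] by auto
    then have "\<bar>A $$ (i,j)\<bar> * (\<bar>y $ i\<bar> * \<bar>y $ j\<bar>) \<le> \<bar>A $$ (i,j)\<bar> * (y \<bullet> y)"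
      by (intro mult_left_mono) auto
    then show "\<bar>y $ i * A $$ (i,j) * y $ j\<bar> \<le> \<bar>A $$ (i,j)\<bar> * (y \<bullet> y)"
      by (simp add: abs_mult algebra_simps)
  qed
  also have "\<dots> = (\<Sum>i<k. \<Sum>j<k. \<bar>A $$ (i,j)\<bar>) * (y \<bullet> y)"
    by (simp add: sum_distrib_right)
  finally show ?thesis .
qed

lemma mat_vec_bound:
  fixes B :: "real mat"
  assumes B: "B \<in> carrier_mat r k" and z: "z \<in> carrier_vec k"
  shows "(B *\<^sub>v z) \<bullet> (B *\<^sub>v z) \<le> (\<Sum>i<r. (\<Sum>j<k. \<bar>B $$ (i,j)\<bar>)^2) * (z \<bullet> z)"
proof -
  have comp: "((B *\<^sub>v z) $ i)^2 \<le> (\<Sum>j<k. \<bar>B $$ (i,j)\<bar>)^2 * (z \<bullet> z)" if i: "i < r" for i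
  proof -
    have e: "(B *\<^sub>v z) $ i = (\<Sum>j<k. B $$ (i,j) * z $ j)"
      using B z i by (auto simp: mult_mat_vec_def scalar_prod_def atLeast0LessThan intro!: sum.cong)
    have "\<bar>(B *\<^sub>v z) $ i\<bar> \<le> (\<Sum>j<k. \<bar>B $$ (i,j)\<bar> * \<bar>z $ j\<bar>)"
      unfolding e by (rule order_trans[OF sum_abs]) (simp add: abs_mult)
    also have "\<dots> \<le> (\<Sum>j<k. \<bar>B $$ (i,j)\<bar> * sqrt (z \<bullet> z))"
      using comp_abs_le[OF z] by (intro sum_mono mult_left_mono) auto
    also have "\<dots> = (\<Sum>j<k. \<bar>B $$ (i,j)\<bar>) * sqrt (z \<bullet> z)" by (simp add: sum_distrib_right)
    finally have "\<bar>(B *\<^sub>v z) $ i\<bar> \<le> (\<Sum>j<k. \<bar>B $$ (i,j)\<bar>) * sqrt (z \<bullet> z)" .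
    then have "\<bar>(B *\<^sub>v z) $ i\<bar>^2 \<le> ((\<Sum>j<k. \<bar>B $$ (i,j)\<bar>) * sqrt (z \<bullet> z))^2"
      by (intro power_mono) auto
    then show ?thesis using sp_self_ge0[of z] by (simp add: power_mult_distrib)
  qed
  have "(B *\<^sub>v z) \<bullet> (B *\<^sub>v z) = (\<Sum>i<r. ((B *\<^sub>v z) $ i)^2)"
    using B by (simp add: scalar_prod_def atLeast0LessThan power2_eq_square)
  also have "\<dots> \<le> (\<Sum>i<r. (\<Sum>j<k. \<bar>B $$ (i,j)\<bar>)^2 * (z \<bullet> z))"
    using comp by (intro sum_mono) auto
  also have "\<dots> = (\<Sum>i<r. (\<Sum>j<k. \<bar>B $$ (i,j)\<bar>)^2) * (z \<bullet> z)" by (simp add: sum_distrib_right)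
  finally show ?thesis .
qed

lemma inv_from_kernel:
  fixes A :: "'a::field mat"
  assumes A: "A \<in> carrier_mat k k"
    and ker: "\<And>v. v \<in> carrier_vec k \<Longrightarrow> A *\<^sub>v v = 0\<^sub>v k \<Longrightarrow> v = 0\<^sub>v k"
  shows "\<exists>B \<in> carrier_mat k k. A * B = 1\<^sub>m k \<and> B * A = 1\<^sub>m k"
proof -
  have "det A \<noteq> 0" using det_0_iff_vec_prod_zero_field[OF A] ker by auto
  from det_non_zero_imp_unit[OF A this, of undefined]
  show ?thesis by (auto simp: Units_def ring_mat_def)
qed

lemma mat_inv_eq:
  fixes A :: "'a::field mat"
  assumes A: "A \<in> carrier_mat k k" and B: "B \<in> carrier_mat k k" and AB: "A * B = 1\<^sub>m k"
  shows "mat_inv A = B"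
proof -
  have BA: "B * A = 1\<^sub>m k" by (rule mat_mult_left_right_inverse[OF A B AB])
  have U: "A \<in> Units (ring_mat TYPE('a) k undefined)"
    using A B AB BA by (auto simp: Units_def ring_mat_def)
  obtain P where P: "mat_inverse A = Some P"
    using mat_inverse(1)[OF A, where b=undefined] U by (cases "mat_inverse A") auto
  from mat_inverse(2)[OF A P] have PA: "P * A = 1\<^sub>m k" and Pc: "P \<in> carrier_mat k k" by auto
  have "P = P * (A * B)" using Pc AB by simp
  also have "\<dots> = (P * A) * B" using Pc A B by (simp add: assoc_mult_mat)
  also have "\<dots> = B" using PA B by simp
  finally show ?thesis unfolding mat_inv_def P by simp
qed

lemma sym_sup_eigen:
  fixes A :: "real mat"
  assumes A: "A \<in> carrier_mat k k" and sym: "A\<^sup>T = A" and k: "0 < k"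
  defines "R \<equiv> {y \<bullet> (A *\<^sub>v y) / (y \<bullet> y) | y. y \<in> carrier_vec k \<and> y \<noteq> 0\<^sub>v k}"
  shows "eigenvalue A (Sup R)" and "\<And>y. y \<in> carrier_vec k \<Longrightarrow> y \<bullet> (A *\<^sub>v y) \<le> Sup R * (y \<bullet> y)"
    and "\<And>x. eigenvalue A x \<Longrightarrow> x \<le> Sup R"
proof -
  define cA where "cA = (\<Sum>i<k. \<Sum>j<k. \<bar>A $$ (i,j)\<bar>)"
  have Rne: "R \<noteq> {}" unfolding R_def using k
    by (auto intro!: exI[of _ "unit_vec k 0"] simp: unit_vec_eq[of 0 k] )
  have Rbdd: "bdd_above R"
  proof (rule bdd_aboveI)
    fix r assume "r \<in> R"
    then obtain y where y: "y \<in> carrier_vec k" "y \<noteq> 0\<^sub>v k" and r: "r = y \<bullet> (A *\<^sub>v y) / (y \<bullet> y)"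
      unfolding R_def by auto
    have pos: "0 < y \<bullet> y" using sp_self_gt0[OF y] .
    have "y \<bullet> (A *\<^sub>v y) \<le> cA * (y \<bullet> y)" using quad_form_bound[OF A y(1)] unfolding cA_def by linarith
    then show "r \<le> cA" unfolding r using pos by (simp add: divide_le_eq)
  qed
  show ray: "y \<bullet> (A *\<^sub>v y) \<le> Sup R * (y \<bullet> y)" if y: "y \<in> carrier_vec k" for y
  proof (cases "y = 0\<^sub>v k")
    case True then show ?thesis using A by simp
  next
    case False
    have pos: "0 < y \<bullet> y" using sp_self_gt0[OF y False] .
    have "y \<bullet> (A *\<^sub>v y) / (y \<bullet> y) \<le> Sup R"
      by (rule cSup_upper[OF _ Rbdd]) (use y False in \<open>auto simp: R_def\<close>)
    then show ?thesis using pos by (simp add: divide_le_eq)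
  qed
  show "x \<le> Sup R" if ev: "eigenvalue A x" for x
  proof -
    obtain v where v: "v \<in> carrier_vec k" "v \<noteq> 0\<^sub>v k" "A *\<^sub>v v = x \<cdot>\<^sub>v v"
      using ev A unfolding eigenvalue_def eigenvector_def by auto
    have pos: "0 < v \<bullet> v" using sp_self_gt0[OF v(1,2)] .
    have "v \<bullet> (A *\<^sub>v v) = x * (v \<bullet> v)" using v(1) by (simp add: v(3) scalar_prod_smult_distrib[of _ k])
    then have "x * (v \<bullet> v) \<le> Sup R * (v \<bullet> v)" using ray[OF v(1)] by simp
    then show ?thesis using pos by simp
  qed
  show "eigenvalue A (Sup R)"
  proof (rule ccontr)
    assume noteig: "\<not> eigenvalue A (Sup R)"
    define M where "M = Sup R"
    define A' where "A' = M \<cdot>\<^sub>m 1\<^sub>m k - A"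
    have A'c: "A' \<in> carrier_mat k k" unfolding A'_def using A by auto
    have A'v: "A' *\<^sub>v y = M \<cdot>\<^sub>v y - A *\<^sub>v y" if "y \<in> carrier_vec k" for y
    proof (rule eq_vecI)
      fix i assume i: "i < dim_vec (M \<cdot>\<^sub>v y - A *\<^sub>v y)"
      then have ik: "i < k" using A by simp
      have "(\<Sum>ia = 0..<k. (M * (if i = ia then 1 else 0) - A $$ (i, ia)) * y $ ia)
          = (\<Sum>ia = 0..<k. M * (if i = ia then 1 else 0) * y $ ia) - (\<Sum>ia = 0..<k. A $$ (i, ia) * y $ ia)"
        by (simp add: sum_subtractf[symmetric] left_diff_distrib)
      also have "(\<Sum>ia = 0..<k. M * (if i = ia then 1 else 0) * y $ ia) = (\<Sum>ia = 0..<k. if i = ia then M * y $ ia else 0)"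
        by (intro sum.cong) auto
      also have "\<dots> = M * y $ i" using ik by (simp add: sum.delta)
      finally show "(A' *\<^sub>v y) $ i = (M \<cdot>\<^sub>v y - A *\<^sub>v y) $ i"
        unfolding A'_def using that A ik by (simp add: scalar_prod_def mult_mat_vec_def row_def one_mat_def)
    qed (use that A A'_def in auto)
    have symE: "A $$ (j,i) = A $$ (i,j)" if "i < k" "j < k" for i j
      using arg_cong[OF sym, of "\<lambda>M. M $$ (i,j)"] A that by simp
    have A'sym: "A'\<^sup>T = A'" unfolding A'_def using A symE
      by (intro eq_matI) (auto simp: one_mat_def)
    have quadA': "y \<bullet> (A' *\<^sub>v y) = M * (y \<bullet> y) - y \<bullet> (A *\<^sub>v y)" if y: "y \<in> carrier_vec k" for y
      using y A by (simp add: A'v scalar_prod_minus_distrib[of _ k] scalar_prod_smult_distrib[of _ k])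
    have psd: "0 \<le> y \<bullet> (A' *\<^sub>v y)" if "y \<in> carrier_vec k" for y
      using quadA'[OF that] ray[OF that] unfolding M_def by simp
    have ker: "v = 0\<^sub>v k" if "v \<in> carrier_vec k" "A' *\<^sub>v v = 0\<^sub>v k" for v
    proof (rule ccontr)
      assume "v \<noteq> 0\<^sub>v k"
      moreover have "A *\<^sub>v v = M \<cdot>\<^sub>v v"
      proof -
        have "M \<cdot>\<^sub>v v - A *\<^sub>v v = 0\<^sub>v k" using that A'v by simp
        then have "\<And>i. i < k \<Longrightarrow> (M \<cdot>\<^sub>v v - A *\<^sub>v v) $ i = 0" by simp
        then show ?thesis using that(1) A
          by (intro eq_vecI) auto
      qed
      ultimately have "eigenvalue A M" using that A unfolding eigenvalue_def eigenvector_def by auto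
      then show False using noteig M_def by simp
    qed
    obtain B where B: "B \<in> carrier_mat k k" "B * A' = 1\<^sub>m k"
      using inv_from_kernel[OF A'c ker] by blast
    define cB where "cB = (\<Sum>i<k. (\<Sum>j<k. \<bar>B $$ (i,j)\<bar>)^2)"
    define cA' where "cA' = (\<Sum>i<k. \<Sum>j<k. \<bar>A' $$ (i,j)\<bar>)"
    have key: "y \<bullet> y \<le> cB * cA' * (y \<bullet> (A' *\<^sub>v y))" if y: "y \<in> carrier_vec k" for y
    proof -
      define z where "z = A' *\<^sub>v y"
      have z: "z \<in> carrier_vec k" unfolding z_def using A'c y by auto
      have "B *\<^sub>v z = y" unfolding z_def using B A'c y by (simp add: assoc_mult_mat_vec[symmetric, of _ k k])
      then have yz: "y \<bullet> y \<le> cB * (z \<bullet> z)" using mat_vec_bound[OF B(1) z] unfolding cB_def by simp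
      have zz: "z \<bullet> z = y \<bullet> (A' *\<^sub>v z)"
        using transpose_vec_mult_scalar[OF A'c z y] A'sym unfolding z_def by simp
      have cs: "(y \<bullet> (A' *\<^sub>v z))^2 \<le> (y \<bullet> (A' *\<^sub>v y)) * (z \<bullet> (A' *\<^sub>v z))"
        by (rule semi_cs[OF A'c A'sym psd y z])
      have zA: "z \<bullet> (A' *\<^sub>v z) \<le> cA' * (z \<bullet> z)"
        using quad_form_bound[OF A'c z] unfolding cA'_def by linarith
      have q0: "0 \<le> y \<bullet> (A' *\<^sub>v y)" by (rule psd[OF y])
      have "(z \<bullet> z)^2 \<le> (y \<bullet> (A' *\<^sub>v y)) * (cA' * (z \<bullet> z))"
        using cs zz zA q0 by (metis mult_left_mono order_trans)
      then have zz2: "z \<bullet> z \<le> cA' * (y \<bullet> (A' *\<^sub>v y))"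
      proof (cases "z \<bullet> z = 0")
        case True
        have "0 \<le> cA'" unfolding cA'_def by (intro sum_nonneg) auto
        then show ?thesis using True q0 by simp
      next
        case False
        then have "0 < z \<bullet> z" using sp_self_ge0[of z] by simp
        then show ?thesis using \<open>(z \<bullet> z)^2 \<le> (y \<bullet> (A' *\<^sub>v y)) * (cA' * (z \<bullet> z))\<close>
          by (simp add: power2_eq_square algebra_simps)
      qed
      have cB0: "0 \<le> cB" unfolding cB_def by (intro sum_nonneg) auto
      show ?thesis using yz mult_left_mono[OF zz2 cB0] by (simp add: algebra_simps)
    qed
    define c where "c = cB * cA'"
    define u0 :: "real vec" where "u0 = unit_vec k 0"
    have uk: "u0 \<in> carrier_vec k" "u0 \<noteq> 0\<^sub>v k" using k by (auto simp: u0_def unit_vec_eq[of 0 k])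
    have "unit_vec k 0 \<in> carrier_vec k" "unit_vec k 0 \<noteq> 0\<^sub>v k" using k by (auto simp: unit_vec_eq[of 0 k])
    have cpos: "0 < c"
    proof -
      have "0 < u0 \<bullet> u0" using sp_self_gt0[OF uk] .
      also have "\<dots> \<le> c * (u0 \<bullet> (A' *\<^sub>v u0))" using key[OF uk(1)] c_def by simp
      finally have "0 < c * (u0 \<bullet> (A' *\<^sub>v u0))" .
      moreover have "0 \<le> u0 \<bullet> (A' *\<^sub>v u0)" by (rule psd[OF uk(1)])
      moreover have "0 \<le> c" unfolding c_def cB_def cA'_def by (intro mult_nonneg_nonneg sum_nonneg) auto
      ultimately show ?thesis by (simp add: zero_less_mult_iff)
    qed
    have "Sup R \<le> M - 1 / c"
    proof (rule cSup_least[OF Rne])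
      fix r assume "r \<in> R"
      then obtain y where y: "y \<in> carrier_vec k" "y \<noteq> 0\<^sub>v k" and r: "r = y \<bullet> (A *\<^sub>v y) / (y \<bullet> y)"
        unfolding R_def by auto
      have pos: "0 < y \<bullet> y" using sp_self_gt0[OF y] .
      have "y \<bullet> y \<le> c * (M * (y \<bullet> y) - y \<bullet> (A *\<^sub>v y))" using key[OF y(1)] quadA'[OF y(1)] c_def by simp
      then have "y \<bullet> y / c \<le> M * (y \<bullet> y) - y \<bullet> (A *\<^sub>v y)" using cpos by (simp add: divide_le_eq mult.commute)
      then have "y \<bullet> (A *\<^sub>v y) \<le> (M - 1/c) * (y \<bullet> y)" by (simp add: algebra_simps)
      then show "r \<le> M - 1/c" unfolding r using pos by (simp add: divide_le_eq)
    qed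
    then show False using cpos unfolding M_def by simp
  qed
qed

lemma eig_finite:
  fixes A :: "'a::field mat"
  assumes A: "A \<in> carrier_mat k k"
  shows "finite {x. eigenvalue A x}"
proof -
  have "char_poly A \<noteq> 0" using degree_monic_char_poly[OF A] by auto
  then show ?thesis using poly_roots_finite eigenvalue_root_char_poly[OF A] by simp
qed

lemma eig_uminus:
  fixes A :: "'a::field mat"
  assumes A: "A \<in> carrier_mat k k"
  shows "eigenvalue (- A) x \<longleftrightarrow> eigenvalue A (- x)"
proof -
  have *: "(- (A *\<^sub>v v) = x \<cdot>\<^sub>v v) \<longleftrightarrow> (A *\<^sub>v v = (- x) \<cdot>\<^sub>v v)" if "v \<in> carrier_vec k" for v
    using that A by (auto simp: vec_eq_iff) (metis minus_minus)
  have **: "(- A) *\<^sub>v v = - (A *\<^sub>v v)" if "v \<in> carrier_vec k" for v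
    using that A by (simp add: uminus_mult_mat_vec)
  show ?thesis using A unfolding eigenvalue_def eigenvector_def
  proof (auto, goal_cases)
    case (1 v) then show ?case using * ** by (intro exI[of _ v]) auto
  next
    case (2 v) then show ?case using * ** by (intro exI[of _ v]) auto
  qed
qed

lemma sym_eig_facts:
  fixes A :: "real mat"
  assumes A: "A \<in> carrier_mat k k" and sym: "A\<^sup>T = A" and k: "0 < k"
  shows "eigenvalue A (lambda_max A)" "eigenvalue A (lambda_min A)"
    "\<And>y. y \<in> carrier_vec k \<Longrightarrow> y \<bullet> (A *\<^sub>v y) \<le> lambda_max A * (y \<bullet> y)"
    "\<And>y. y \<in> carrier_vec k \<Longrightarrow> lambda_min A * (y \<bullet> y) \<le> y \<bullet> (A *\<^sub>v y)"
    "\<And>x. eigenvalue A x \<Longrightarrow> lambda_min A \<le> x \<and> x \<le> lambda_max A"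
proof -
  define R where "R = {y \<bullet> (A *\<^sub>v y) / (y \<bullet> y) | y. y \<in> carrier_vec k \<and> y \<noteq> 0\<^sub>v k}"
  note S = sym_sup_eigen[OF A sym k, folded R_def]
  have fin: "finite {x. eigenvalue A x}" by (rule eig_finite[OF A])
  have lmax: "lambda_max A = Sup R" unfolding lambda_max_def
    by (rule Max_eqI[OF fin]) (use S in auto)
  have mA: "- A \<in> carrier_mat k k" using A by simp
  have msym: "(- A)\<^sup>T = - A" using sym by (simp add: transpose_uminus)
  define R' where "R' = {y \<bullet> (- A *\<^sub>v y) / (y \<bullet> y) | y. y \<in> carrier_vec k \<and> y \<noteq> 0\<^sub>v k}"
  note S' = sym_sup_eigen[OF mA msym k, folded R'_def]
  have e1: "eigenvalue A (- Sup R')" using S'(1) eig_uminus[OF A] by simp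
  have e2: "- Sup R' \<le> x" if "eigenvalue A x" for x
    using S'(3)[of "-x"] eig_uminus[OF A, of "-x"] that by simp
  have lmin: "lambda_min A = - Sup R'" unfolding lambda_min_def
    by (rule Min_eqI[OF fin]) (use e1 e2 in auto)
  show "eigenvalue A (lambda_max A)" using S(1) lmax by simp
  show "eigenvalue A (lambda_min A)" using e1 lmin by simp
  show "y \<bullet> (A *\<^sub>v y) \<le> lambda_max A * (y \<bullet> y)" if "y \<in> carrier_vec k" for y
    using S(2)[OF that] lmax by simp
  show "lambda_min A * (y \<bullet> y) \<le> y \<bullet> (A *\<^sub>v y)" if y: "y \<in> carrier_vec k" for y
  proof -
    have "y \<bullet> (- A *\<^sub>v y) = - (y \<bullet> (A *\<^sub>v y))" using y A
      by (simp add: uminus_mult_mat_vec scalar_prod_uminus_right)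
    then show ?thesis using S'(2)[OF y] lmin by simp
  qed
  show "lambda_min A \<le> x \<and> x \<le> lambda_max A" if "eigenvalue A x" for x
    using that e2 lmin S(3) lmax by simp
qed


lemma diag_mult_vec:
  assumes "v \<in> carrier_vec k"
  shows "mat_diag k f *\<^sub>v v = vec k (\<lambda>i. f i * v $ i)"
proof (rule eq_vecI)
  fix i assume "i < dim_vec (vec k (\<lambda>i. f i * v $ i))"
  then have i: "i < k" by simp
  have "(\<Sum>j = 0..<k. (if i = j then f j else 0) * v $ j) = (\<Sum>j = 0..<k. if j = i then f i * v $ i else 0)"
    by (intro sum.cong) auto
  also have "\<dots> = f i * v $ i" using i by simp
  finally show "(mat_diag k f *\<^sub>v v) $ i = vec k (\<lambda>i. f i * v $ i) $ i"
    using i assms by (simp add: mat_diag_def mult_mat_vec_def scalar_prod_def row_def)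
qed (use assms in \<open>auto simp: mat_diag_def\<close>)

lemma diag_eig:
  fixes f :: "nat \<Rightarrow> 'a::field"
  shows "eigenvalue (mat_diag k f) x \<longleftrightarrow> (\<exists>i<k. x = f i)"
proof
  assume "eigenvalue (mat_diag k f) x"
  then obtain v where v: "v \<in> carrier_vec k" "v \<noteq> 0\<^sub>v k" "mat_diag k f *\<^sub>v v = x \<cdot>\<^sub>v v"
    unfolding eigenvalue_def eigenvector_def by (auto simp: mat_diag_def)
  obtain i where i: "i < k" "v $ i \<noteq> 0" using v(1,2) by (auto simp: vec_eq_iff)
  have "f i * v $ i = x * v $ i" using arg_cong[OF v(3), of "\<lambda>u. u $ i"] i v(1)
    by (simp add: diag_mult_vec)
  then show "\<exists>i<k. x = f i" using i by auto
next
  assume "\<exists>i<k. x = f i"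
  then obtain i where i: "i < k" "x = f i" by auto
  have "mat_diag k f *\<^sub>v unit_vec k i = x \<cdot>\<^sub>v unit_vec k i"
    using i by (auto simp: diag_mult_vec vec_eq_iff unit_vec_def)
  moreover have "unit_vec k i \<noteq> (0\<^sub>v k :: 'a vec)" using i by (auto simp: vec_eq_iff unit_vec_def)
  ultimately show "eigenvalue (mat_diag k f) x" unfolding eigenvalue_def eigenvector_def
    by (intro exI[of _ "unit_vec k i"]) (auto simp: mat_diag_def)
qed

lemma diag_lambda:
  fixes f :: "nat \<Rightarrow> real"
  shows "lambda_max (mat_diag k f) = Max (f ` {..<k})" "lambda_min (mat_diag k f) = Min (f ` {..<k})"
proof -
  have "{x. eigenvalue (mat_diag k f) x} = f ` {..<k}" by (auto simp: diag_eig)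
  then show "lambda_max (mat_diag k f) = Max (f ` {..<k})" "lambda_min (mat_diag k f) = Min (f ` {..<k})"
    unfolding lambda_max_def lambda_min_def by simp_all
qed

lemma diag_quad:
  fixes f :: "nat \<Rightarrow> real"
  assumes "y \<in> carrier_vec k"
  shows "y \<bullet> (mat_diag k f *\<^sub>v y) = (\<Sum>i<k. f i * (y $ i)^2)"
  using assms by (simp add: diag_mult_vec scalar_prod_def atLeast0LessThan power2_eq_square algebra_simps)

lemma incidence_col:
  assumes "l < m" "fst (e l) \<noteq> snd (e l)"
  shows "incidence_mat n m e *\<^sub>v unit_vec m l = unit_vec n (fst (e l)) - unit_vec n (snd (e l))"
proof (rule eq_vecI)
  fix i assume "i < dim_vec (unit_vec n (fst (e l)) - unit_vec n (snd (e l)) :: real vec)"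
  then have i: "i < n" by simp
  let ?d = "\<lambda>j. if i = fst (e j) then 1 else if i = snd (e j) then -1 else (0::real)"
  have "(\<Sum>j = 0..<m. ?d j * (if j = l then 1 else 0)) = (\<Sum>j = 0..<m. if j = l then ?d l else 0)"
    by (intro sum.cong) auto
  also have "\<dots> = ?d l" using assms by simp
  finally show "(incidence_mat n m e *\<^sub>v unit_vec m l) $ i = (unit_vec n (fst (e l)) - unit_vec n (snd (e l))) $ i"
    using i assms by (auto simp: incidence_mat_def mult_mat_vec_def scalar_prod_def row_def unit_vec_def)
qed (auto simp: incidence_mat_def)

lemma tree_paths:
  assumes tree: "is_tree n e" and p: "(0, i) \<in> (edge_rel (n - 1) e)\<^sup>*"
  shows "\<exists>c \<in> carrier_vec (n - 1). incidence_mat n (n - 1) e *\<^sub>v c = unit_vec n 0 - unit_vec n i"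
  using p
proof (induction rule: rtrancl_induct)
  case base
  then show ?case by (intro bexI[of _ "0\<^sub>v (n - 1)"]) (auto simp: incidence_mat_def)
next
  case (step a b)
  let ?D = "incidence_mat n (n - 1) e"
  from step.IH obtain c where c: "c \<in> carrier_vec (n - 1)" "?D *\<^sub>v c = unit_vec n 0 - unit_vec n a" by auto
  from step.hyps(2) obtain l where l: "l < n - 1" "e l = (a, b) \<or> e l = (b, a)" unfolding edge_rel_def by auto
  have ne: "fst (e l) \<noteq> snd (e l)" using tree l(1) unfolding is_tree_def by auto
  have Dc: "?D \<in> carrier_mat n (n - 1)" by (simp add: incidence_mat_def)
  have ul: "unit_vec (n - 1) l \<in> carrier_vec (n - 1)" by simp
  have col: "?D *\<^sub>v unit_vec (n - 1) l = unit_vec n (fst (e l)) - unit_vec n (snd (e l))"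
    by (rule incidence_col[where e=e and l=l, OF l(1) ne])
  show ?case
  proof (cases "e l = (a, b)")
    case True
    have "?D *\<^sub>v (c + unit_vec (n - 1) l) = ?D *\<^sub>v c + ?D *\<^sub>v unit_vec (n - 1) l"
      by (rule mult_add_distrib_mat_vec[OF Dc c(1) ul])
    also have "\<dots> = unit_vec n 0 - unit_vec n b" unfolding c(2) col True
      by (auto simp: vec_eq_iff)
    finally show ?thesis using c(1) by (intro bexI[of _ "c + unit_vec (n - 1) l"]) auto
  next
    case False
    then have eq: "e l = (b, a)" using l(2) by auto
    have "?D *\<^sub>v (c - unit_vec (n - 1) l) = ?D *\<^sub>v c - ?D *\<^sub>v unit_vec (n - 1) l"
      by (rule mult_minus_distrib_mat_vec[OF Dc c(1) ul])
    also have "\<dots> = unit_vec n 0 - unit_vec n b" unfolding c(2) col eq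
      by (auto simp: vec_eq_iff)
    finally show ?thesis using c(1) by (intro bexI[of _ "c - unit_vec (n - 1) l"]) auto
  qed
qed

lemma mat_vec_zero:
  assumes "A \<in> carrier_mat r k"
  shows "A *\<^sub>v 0\<^sub>v k = (0\<^sub>v r :: 'a::comm_ring vec)"
  using assms by (intro eq_vecI) (simp_all add: scalar_prod_def)

lemma tree_kernel:
  assumes tree: "is_tree n e" and n: "n \<ge> 2"
    and x: "x \<in> carrier_vec (n - 1)" and Dx: "incidence_mat n (n - 1) e *\<^sub>v x = 0\<^sub>v n"
  shows "x = 0\<^sub>v (n - 1)"
proof -
  define m where "m = n - 1"
  define D where "D = incidence_mat n m e"
  have Dc: "D \<in> carrier_mat n m" by (simp add: D_def incidence_mat_def)
  have ex: "\<exists>c \<in> carrier_vec m. D *\<^sub>v c = unit_vec n 0 - unit_vec n i" if "i < n" for i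
    using tree_paths[OF tree, of i] tree that unfolding is_tree_def D_def m_def by auto
  define c where "c i = (SOME c. c \<in> carrier_vec m \<and> D *\<^sub>v c = unit_vec n 0 - unit_vec n i)" for i
  have c: "c i \<in> carrier_vec m" "D *\<^sub>v c i = unit_vec n 0 - unit_vec n i" if "i < n" for i
    using someI_ex[OF ex[OF that, unfolded Bex_def]] unfolding c_def by auto
  define X where "X = mat m m (\<lambda>(l, j). - (c (j + 1) $ l))"
  define D' where "D' = mat m m (\<lambda>(i, l). D $$ (i + 1, l))"
  have Xc: "X \<in> carrier_mat m m" and D'c: "D' \<in> carrier_mat m m" by (auto simp: X_def D'_def)
  have D'X: "D' * X = 1\<^sub>m m"
  proof (rule eq_matI)
    fix i j assume ij: "i < dim_row (1\<^sub>m m :: real mat)" "j < dim_col (1\<^sub>m m :: real mat)"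
    then have i: "i < m" and j: "j < m" by auto
    have jn: "j + 1 < n" using j m_def n by simp
    have "(D' * X) $$ (i, j) = - (\<Sum>l = 0..<m. D $$ (i + 1, l) * c (j + 1) $ l)"
      using i j by (simp add: D'_def X_def scalar_prod_def row_def col_def sum_negf[symmetric])
    also have "(\<Sum>l = 0..<m. D $$ (i + 1, l) * c (j + 1) $ l) = (D *\<^sub>v c (j + 1)) $ (i + 1)"
      using i Dc c(1)[OF jn] m_def n by (simp add: mult_mat_vec_def scalar_prod_def row_def)
    also have "\<dots> = (unit_vec n 0 - unit_vec n (j + 1)) $ (i + 1)" using c(2)[OF jn] by simp
    also have "\<dots> = - (if i = j then 1 else 0)" using i j m_def n by (simp add: unit_vec_def)
    finally show "(D' * X) $$ (i, j) = 1\<^sub>m m $$ (i, j)" using i j by simp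
  qed (auto simp: D'_def X_def)
  have XD': "X * D' = 1\<^sub>m m" by (rule mat_mult_left_right_inverse[OF D'c Xc D'X])
  have xm: "x \<in> carrier_vec m" using x m_def by simp
  have "D' *\<^sub>v x = 0\<^sub>v m"
  proof (rule eq_vecI)
    fix i assume "i < dim_vec (0\<^sub>v m :: real vec)"
    then have i: "i < m" by simp
    have "(D' *\<^sub>v x) $ i = (D *\<^sub>v x) $ (i + 1)"
      using i xm Dc m_def n by (simp add: D'_def mult_mat_vec_def scalar_prod_def row_def)
    also have "\<dots> = 0" using Dx i m_def n unfolding D_def by simp
    finally show "(D' *\<^sub>v x) $ i = 0\<^sub>v m $ i" using i by simp
  qed (simp add: D'_def)
  then have "X *\<^sub>v (D' *\<^sub>v x) = 0\<^sub>v m" using Xc by (simp add: mat_vec_zero)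
  then have "(X * D') *\<^sub>v x = 0\<^sub>v m" using assoc_mult_mat_vec[OF Xc D'c xm] by simp
  then show ?thesis using XD' xm m_def by simp
qed


definition cn :: "complex vec \<Rightarrow> real" where
  "cn v = (\<Sum>i<dim_vec v. (cmod (v $ i))^2)"

definition cip :: "complex vec \<Rightarrow> complex vec \<Rightarrow> complex" where
  "cip x y = (\<Sum>i<dim_vec x. cnj (x $ i) * y $ i)"

lemma adj_dims[simp]:
  "dim_row (mat_adjoint A) = dim_col A" "dim_col (mat_adjoint A) = dim_row A"
  by (simp_all add: mat_adjoint_def mat_of_rows_def)

lemma adj_carrier: "A \<in> carrier_mat r c \<Longrightarrow> mat_adjoint A \<in> carrier_mat c r"
  by (metis adj_dims carrier_matD carrier_matI)

lemma adj_entry[simp]: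
  fixes A :: "complex mat"
  assumes "i < dim_col A" "j < dim_row A"
  shows "mat_adjoint A $$ (i, j) = cnj (A $$ (j, i))"
  using assms unfolding mat_adjoint_def mat_of_rows_def by (simp add: conjugate_complex_def)

lemma cip_self: "cip v v = complex_of_real (cn v)"
  unfolding cip_def cn_def of_real_sum by (intro sum.cong) (simp_all add: complex_norm_square[symmetric] mult.commute)

lemma cn_nonneg: "0 \<le> cn v"
  unfolding cn_def by (intro sum_nonneg) auto

lemma cn_pos:
  assumes "v \<in> carrier_vec k" "v \<noteq> 0\<^sub>v k"
  shows "0 < cn v"
proof -
  obtain i where i: "i < k" "v $ i \<noteq> 0"
  proof (rule ccontr)
    assume "\<not> thesis"
    with that have "\<forall>i<k. v $ i = 0" by blast
    then have "v = 0\<^sub>v k" using assms(1) by (intro eq_vecI) auto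
    then show False using assms(2) by simp
  qed
  have "0 < (cmod (v $ i))^2" using i by simp
  also have "\<dots> \<le> cn v" unfolding cn_def using i assms by (intro member_le_sum) auto
  finally show ?thesis .
qed

lemma cip_smult_right:
  "cip x (c \<cdot>\<^sub>v y) = c * cip x y" if "dim_vec y = dim_vec x"
  using that unfolding cip_def by (simp add: sum_distrib_left algebra_simps)

lemma adj_ip:
  fixes A :: "complex mat"
  assumes A: "A \<in> carrier_mat r c" and x: "x \<in> carrier_vec c" and y: "y \<in> carrier_vec r"
  shows "cip y (A *\<^sub>v x) = cip (mat_adjoint A *\<^sub>v y) x"
proof -
  have "cip y (A *\<^sub>v x) = (\<Sum>i<r. \<Sum>j<c. cnj (y $ i) * (A $$ (i,j) * x $ j))"
    using A x y by (simp add: cip_def mult_mat_vec_def scalar_prod_def row_def sum_distrib_left atLeast0LessThan)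
  also have "\<dots> = (\<Sum>j<c. \<Sum>i<r. cnj (y $ i) * (A $$ (i,j) * x $ j))" by (rule sum.swap)
  also have "\<dots> = cip (mat_adjoint A *\<^sub>v y) x"
    using A x y by (simp add: cip_def mult_mat_vec_def scalar_prod_def row_def sum_distrib_right
        sum_distrib_left atLeast0LessThan algebra_simps)
  finally show ?thesis .
qed

lemma adj_mult:
  fixes A B :: "complex mat"
  assumes A: "A \<in> carrier_mat r k" and B: "B \<in> carrier_mat k c"
  shows "mat_adjoint (A * B) = mat_adjoint B * mat_adjoint A"
proof (rule eq_matI)
  fix i j assume "i < dim_row (mat_adjoint B * mat_adjoint A)" "j < dim_col (mat_adjoint B * mat_adjoint A)"
  then have i: "i < c" and j: "j < r" using A B by auto
  show "mat_adjoint (A * B) $$ (i, j) = (mat_adjoint B * mat_adjoint A) $$ (i, j)"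
    using A B i j by (simp add: scalar_prod_def row_def col_def algebra_simps)
qed (use A B in auto)

lemma adj_adj:
  fixes A :: "complex mat"
  shows "mat_adjoint (mat_adjoint A) = A"
  by (rule eq_matI) auto

lemma cip_carrier_smult:
  assumes "v \<in> carrier_vec k"
  shows "cip v (x \<cdot>\<^sub>v v) = x * complex_of_real (cn v)"
  using assms by (simp add: cip_smult_right cip_self)

lemma quad_H:
  fixes S :: "complex mat"
  assumes S: "S \<in> carrier_mat r c" and v: "v \<in> carrier_vec c"
  shows "cip v ((mat_adjoint S * S) *\<^sub>v v) = complex_of_real (cn (S *\<^sub>v v))"
proof -
  have Sa: "mat_adjoint S \<in> carrier_mat c r" using adj_carrier[OF S] .
  have "(mat_adjoint S * S) *\<^sub>v v = mat_adjoint S *\<^sub>v (S *\<^sub>v v)"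
    using assoc_mult_mat_vec[OF Sa S v] .
  moreover have "cip v (mat_adjoint S *\<^sub>v (S *\<^sub>v v)) = cip (S *\<^sub>v v) (S *\<^sub>v v)"
    using adj_ip[OF Sa, of "S *\<^sub>v v" v] S v by (simp add: adj_adj)
  ultimately show ?thesis by (simp add: cip_self)
qed

lemma H_eig_real:
  fixes S :: "complex mat"
  assumes S: "S \<in> carrier_mat r c" and ev: "eigenvector (mat_adjoint S * S) v k"
  shows "k = complex_of_real (cn (S *\<^sub>v v) / cn v)" "0 < cn v"
proof -
  have v: "v \<in> carrier_vec c" "v \<noteq> 0\<^sub>v c" "(mat_adjoint S * S) *\<^sub>v v = k \<cdot>\<^sub>v v"
    using ev S unfolding eigenvector_def by auto
  show pos: "0 < cn v" by (rule cn_pos[OF v(1,2)])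
  have "k * complex_of_real (cn v) = complex_of_real (cn (S *\<^sub>v v))"
    using quad_H[OF S v(1)] v(3) cip_carrier_smult[OF v(1)] by simp
  then show "k = complex_of_real (cn (S *\<^sub>v v) / cn v)" using pos
    by (simp add: field_simps)
qed

lemma sigma_props:
  fixes S :: "complex mat"
  assumes S: "S \<in> carrier_mat r c" and c: "0 < c"
  defines "T \<equiv> {x::real. eigenvalue (mat_adjoint S * S) (complex_of_real x)}"
  shows "finite T" "T \<noteq> {}" "\<And>x. x \<in> T \<Longrightarrow> 0 \<le> x" "sigma_max S ^ 2 = Max T" "0 \<le> sigma_max S"
proof -
  define H where "H = mat_adjoint S * S"
  have H: "H \<in> carrier_mat c c" unfolding H_def using S by auto
  have "char_poly H \<noteq> 0" using degree_monic_char_poly[OF H] by auto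
  have fin: "finite {z. poly (char_poly H) z = 0}" by (rule poly_roots_finite) fact
  have "T = complex_of_real -` {z. poly (char_poly H) z = 0}"
    unfolding T_def H_def[symmetric] using eigenvalue_root_char_poly[OF H] by auto
  moreover have "finite (complex_of_real -` {z. poly (char_poly H) z = 0})"
    by (rule finite_vimageI[OF fin]) (simp add: inj_of_real)
  ultimately show finT: "finite T" by simp
  show nn: "0 \<le> x" if "x \<in> T" for x
  proof -
    from that obtain v where ev: "eigenvector H v (complex_of_real x)" unfolding T_def H_def eigenvalue_def by auto
    have "complex_of_real x = complex_of_real (cn (S *\<^sub>v v) / cn v)" by (rule H_eig_real(1)[OF S ev[unfolded H_def]])
    then have "x = cn (S *\<^sub>v v) / cn v" by (simp only: of_real_eq_iff)
    moreover have "0 < cn v" by (rule H_eig_real(2)[OF S ev[unfolded H_def]])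
    ultimately show ?thesis using cn_nonneg[of "S *\<^sub>v v"] by simp
  qed
  have "\<not> constant (poly (char_poly H))" using degree_monic_char_poly[OF H] c by (simp add: constant_degree)
  then obtain z where "poly (char_poly H) z = 0" using fundamental_theorem_of_algebra by blast
  then have "eigenvalue H z" using eigenvalue_root_char_poly[OF H] by simp
  then obtain v where ev: "eigenvector H v z" unfolding eigenvalue_def by auto
  have "z = complex_of_real (cn (S *\<^sub>v v) / cn v)" by (rule H_eig_real(1)[OF S ev[unfolded H_def]])
  then have "cn (S *\<^sub>v v) / cn v \<in> T" using \<open>eigenvalue H z\<close> unfolding T_def H_def by simp
  then show neT: "T \<noteq> {}" by auto
  have MT: "Max T \<in> T" using Max_in[OF finT neT] .
  have "sigma_max S = sqrt (Max T)" unfolding sigma_max_def T_def ..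
  then show "sigma_max S ^ 2 = Max T" "0 \<le> sigma_max S" using nn[OF MT] by simp_all
qed

lemma sigma_upper:
  fixes S :: "complex mat"
  assumes S: "S \<in> carrier_mat r c" and c: "0 < c" and U: "0 \<le> U"
    and bound: "\<And>u. u \<in> carrier_vec r \<Longrightarrow> cn (mat_adjoint S *\<^sub>v u) \<le> U * cn u"
  shows "sigma_max S ^ 2 \<le> U"
proof -
  define T where "T = {x::real. eigenvalue (mat_adjoint S * S) (complex_of_real x)}"
  note P = sigma_props[OF S c, folded T_def]
  have Sa: "mat_adjoint S \<in> carrier_mat c r" using adj_carrier[OF S] .
  have le: "x \<le> U" if xT: "x \<in> T" for x
  proof (cases "x = 0")
    case True then show ?thesis using U by simp
  next
    case False
    with P(3)[OF xT] have xpos: "0 < x" by simp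
    from xT obtain v where ev: "eigenvector (mat_adjoint S * S) v (complex_of_real x)"
      unfolding T_def eigenvalue_def by auto
    have v: "v \<in> carrier_vec c" "(mat_adjoint S * S) *\<^sub>v v = complex_of_real x \<cdot>\<^sub>v v"
      using ev S unfolding eigenvector_def by auto
    have "complex_of_real x = complex_of_real (cn (S *\<^sub>v v) / cn v)" by (rule H_eig_real(1)[OF S ev])
    then have xe: "x = cn (S *\<^sub>v v) / cn v" by (simp only: of_real_eq_iff)
    have cv: "0 < cn v" by (rule H_eig_real(2)[OF S ev])
    define u where "u = S *\<^sub>v v"
    have u: "u \<in> carrier_vec r" unfolding u_def using S v by auto
    have cu: "0 < cn u" using xe cv xpos unfolding u_def by (simp add: zero_less_divide_iff)
    have "S *\<^sub>v (mat_adjoint S *\<^sub>v u) = S *\<^sub>v ((mat_adjoint S * S) *\<^sub>v v)"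
      unfolding u_def using assoc_mult_mat_vec[OF Sa S v(1)] by simp
    also have "\<dots> = complex_of_real x \<cdot>\<^sub>v u" unfolding v(2) u_def using S v(1) by (simp add: mult_mat_vec)
    finally have SSu: "S *\<^sub>v (mat_adjoint S *\<^sub>v u) = complex_of_real x \<cdot>\<^sub>v u" .
    have "complex_of_real (cn (mat_adjoint S *\<^sub>v u)) = cip (mat_adjoint S *\<^sub>v u) (mat_adjoint S *\<^sub>v u)"
      by (simp add: cip_self)
    also have "\<dots> = cip u (S *\<^sub>v (mat_adjoint S *\<^sub>v u))"
      using adj_ip[OF S, of "mat_adjoint S *\<^sub>v u" u] Sa u by simp
    also have "\<dots> = complex_of_real (x * cn u)" unfolding SSu using cip_carrier_smult[OF u] by simp
    finally have "cn (mat_adjoint S *\<^sub>v u) = x * cn u" by (simp only: of_real_eq_iff)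
    then have "x * cn u \<le> U * cn u" using bound[OF u] by simp
    then show ?thesis using cu by simp
  qed
  show ?thesis using P(4) le[OF Max_in[OF P(1) P(2)]] by simp
qed


lemma tvec_entry:
  fixes M :: "'a::comm_ring mat"
  assumes M: "M \<in> carrier_mat r c" and q: "q \<in> carrier_vec r" and j: "j < c"
  shows "(M\<^sup>T *\<^sub>v q) $ j = (\<Sum>i<r. M $$ (i, j) * q $ i)"
  using assms by (simp add: mult_mat_vec_def scalar_prod_def row_def atLeast0LessThan)

lemma norm_append:
  fixes P Q :: "real mat"
  assumes P: "P \<in> carrier_mat r c1" and Q: "Q \<in> carrier_mat r c2" and q: "q \<in> carrier_vec r"
  shows "((append_cols P Q)\<^sup>T *\<^sub>v q) \<bullet> ((append_cols P Q)\<^sup>T *\<^sub>v q)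
     = (P\<^sup>T *\<^sub>v q) \<bullet> (P\<^sup>T *\<^sub>v q) + (Q\<^sup>T *\<^sub>v q) \<bullet> (Q\<^sup>T *\<^sub>v q)"
proof -
  define A where "A = append_cols P Q"
  have A: "A \<in> carrier_mat r (c1 + c2)" unfolding A_def append_cols_def using P Q by auto
  have eA: "A $$ (i, j) = (if j < c1 then P $$ (i, j) else Q $$ (i, j - c1))" if "i < r" "j < c1 + c2" for i j
    using that P Q unfolding A_def append_cols_def by auto
  define f where "f j = ((A\<^sup>T *\<^sub>v q) $ j)^2" for j
  have "(A\<^sup>T *\<^sub>v q) \<bullet> (A\<^sup>T *\<^sub>v q) = (\<Sum>j = 0..<c1 + c2. f j)"
    using A by (simp add: scalar_prod_def f_def power2_eq_square)
  also have "\<dots> = (\<Sum>j = 0..<c1. f j) + (\<Sum>j = c1..<c1 + c2. f j)"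
    by (rule sum.atLeastLessThan_concat[symmetric]) auto
  also have "(\<Sum>j = c1..<c1 + c2. f j) = (\<Sum>j = 0..<c2. f (j + c1))"
    using sum.shift_bounds_nat_ivl[of f 0 c1 c2] by (simp add: add.commute)
  also have "(\<Sum>j = 0..<c1. f j) = (P\<^sup>T *\<^sub>v q) \<bullet> (P\<^sup>T *\<^sub>v q)"
  proof -
    have "f j = ((P\<^sup>T *\<^sub>v q) $ j)^2" if "j < c1" for j
      unfolding f_def using tvec_entry[OF A q, of j] tvec_entry[OF P q, of j] that eA by simp
    then show ?thesis using P by (simp add: scalar_prod_def power2_eq_square)
  qed
  also have "(\<Sum>j = 0..<c2. f (j + c1)) = (Q\<^sup>T *\<^sub>v q) \<bullet> (Q\<^sup>T *\<^sub>v q)"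
  proof -
    have "f (j + c1) = ((Q\<^sup>T *\<^sub>v q) $ j)^2" if "j < c2" for j
      unfolding f_def using tvec_entry[OF A q, of "j + c1"] tvec_entry[OF Q q, of j] that eA by simp
    then show ?thesis using Q by (simp add: scalar_prod_def power2_eq_square)
  qed
  finally show ?thesis unfolding A_def .
qed

definition vre :: "complex vec \<Rightarrow> real vec" where "vre z = vec (dim_vec z) (\<lambda>i. Re (z $ i))"
definition vim :: "complex vec \<Rightarrow> real vec" where "vim z = vec (dim_vec z) (\<lambda>i. Im (z $ i))"

lemma vre_carrier[simp]: "z \<in> carrier_vec k \<Longrightarrow> vre z \<in> carrier_vec k"
  and vim_carrier[simp]: "z \<in> carrier_vec k \<Longrightarrow> vim z \<in> carrier_vec k"
  by (auto simp: vre_def vim_def)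

lemma cn_split: "cn z = vre z \<bullet> vre z + vim z \<bullet> vim z"
proof -
  have e: "(cmod (z $ i))^2 = Re (z $ i) * Re (z $ i) + Im (z $ i) * Im (z $ i)" for i
    using cmod_power2[of "z $ i"] by (simp add: power2_eq_square)
  show ?thesis unfolding cn_def vre_def vim_def scalar_prod_def e
    by (simp add: sum.distrib atLeast0LessThan)
qed

lemma re_mult:
  fixes M :: "real mat"
  assumes M: "M \<in> carrier_mat r c" and z: "z \<in> carrier_vec c"
  shows "vre (map_mat complex_of_real M *\<^sub>v z) = M *\<^sub>v vre z"
    and "vim (map_mat complex_of_real M *\<^sub>v z) = M *\<^sub>v vim z"
proof -
  show "vre (map_mat complex_of_real M *\<^sub>v z) = M *\<^sub>v vre z"
  proof (rule eq_vecI)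
    fix i assume "i < dim_vec (M *\<^sub>v vre z)"
    then have i: "i < r" using M by simp
    show "vre (map_mat complex_of_real M *\<^sub>v z) $ i = (M *\<^sub>v vre z) $ i"
      using i M z by (simp add: vre_def mult_mat_vec_def scalar_prod_def row_def Re_sum)
  qed (use M z in \<open>simp add: vre_def\<close>)
  show "vim (map_mat complex_of_real M *\<^sub>v z) = M *\<^sub>v vim z"
  proof (rule eq_vecI)
    fix i assume "i < dim_vec (M *\<^sub>v vim z)"
    then have i: "i < r" using M by simp
    show "vim (map_mat complex_of_real M *\<^sub>v z) $ i = (M *\<^sub>v vim z) $ i"
      using i M z by (simp add: vim_def mult_mat_vec_def scalar_prod_def row_def Im_sum)
  qed (use M z in \<open>simp add: vim_def\<close>)
qed


lemma diag_transpose: "(mat_diag k f)\<^sup>T = mat_diag k f"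
  by (rule eq_matI) (auto simp: mat_diag_def)

locale sett =
  fixes n :: nat and e :: "nat \<Rightarrow> nat \<times> nat" and w \<epsilon> :: "nat \<Rightarrow> real" and \<sigma>w \<sigma>v :: real
    and m :: nat
  assumes n2: "n \<ge> 2" and tree: "is_tree n e" and wpos: "\<forall>l < m. w l > 0"
    and epos: "\<forall>i < n. \<epsilon> i > 0" and nm: "n = Suc m"
begin

definition "D = incidence_mat n (m) e"
definition "Einv = mat_diag n (\<lambda>i. 1 / \<epsilon> i)"
definition "Einvh = mat_diag n (\<lambda>i. 1 / sqrt (\<epsilon> i))"
definition "L = transpose_mat D * Einv * D"
definition "W = mat_diag (m) w"
definition "Wh = mat_diag (m) (\<lambda>l. sqrt (w l))"
definition "Winv = mat_diag (m) (\<lambda>l. 1 / w l)"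
definition "B = append_cols (\<sigma>w \<cdot>\<^sub>m (transpose_mat D * Einvh)) ((- \<sigma>v) \<cdot>\<^sub>m (L * Wh))"
definition "NB q = \<sigma>w^2 * (q \<bullet> (L *\<^sub>v q)) + \<sigma>v^2 * (\<Sum>l<m. w l * ((L *\<^sub>v q) $ l)^2)"

lemma m_pos: "0 < m" using n2 nm by simp
lemma m_eq: "n - 1 = m" using nm by simp

lemma Einvc[simp]: "Einv \<in> carrier_mat n n" by (simp add: Einv_def)
lemma Einvhc[simp]: "Einvh \<in> carrier_mat n n" by (simp add: Einvh_def)
lemma Dc[simp]: "D \<in> carrier_mat n (m)" by (simp add: D_def incidence_mat_def)
lemma Lc[simp]: "L \<in> carrier_mat (m) (m)"
  unfolding L_def using Dc Einvc by (metis mult_carrier_mat transpose_carrier_mat)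
lemma Wc[simp]: "W \<in> carrier_mat (m) (m)" by (simp add: W_def)
lemma Whc[simp]: "Wh \<in> carrier_mat (m) (m)" by (simp add: Wh_def)
lemma Winvc[simp]: "Winv \<in> carrier_mat (m) (m)" by (simp add: Winv_def)
lemma Bc[simp]: "B \<in> carrier_mat (m) (n + (m))"
proof -
  have "dim_row D = n" "dim_col D = m" "dim_col Einvh = n" "dim_row L = m" "dim_col Wh = m"
    using Dc Einvhc Whc Lc by (simp_all only: carrier_matD)
  then show ?thesis unfolding B_def append_cols_def by (intro carrier_matI) simp_all
qed

lemma dims[simp]:
  "dim_row D = n" "dim_col D = m" "dim_row L = m" "dim_col L = m" "dim_row W = m" "dim_col W = m"
  "dim_row Wh = m" "dim_col Wh = m" "dim_row Winv = m" "dim_col Winv = m"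
  "dim_row Einv = n" "dim_col Einv = n" "dim_row Einvh = n" "dim_col Einvh = n"
  "dim_row B = m" "dim_col B = n + m"
  using Dc Lc Wc Whc Winvc Einvc Einvhc Bc by (simp_all only: carrier_matD)

lemma L_sym: "L\<^sup>T = L"
proof -
  have DT: "D\<^sup>T \<in> carrier_mat (m) n" using Dc by simp
  have DE: "D\<^sup>T * Einv \<in> carrier_mat (m) n" using DT Einvc by (metis mult_carrier_mat)
  have ET: "Einv\<^sup>T = Einv" by (simp add: Einv_def diag_transpose)
  have e1: "(D\<^sup>T * Einv)\<^sup>T = Einv * D" using transpose_mult[OF DT Einvc] ET by (simp add: transpose_transpose)
  have "L\<^sup>T = D\<^sup>T * (D\<^sup>T * Einv)\<^sup>T"
    unfolding L_def using transpose_mult[OF DE Dc] by (simp add: transpose_transpose)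
  also have "\<dots> = D\<^sup>T * (Einv * D)" using e1 by simp
  also have "\<dots> = L" unfolding L_def using assoc_mult_mat[OF DT Einvc Dc] by simp
  finally show ?thesis .
qed

lemma L_entry_sym: "i < m \<Longrightarrow> j < m \<Longrightarrow> L $$ (j, i) = L $$ (i, j)"
  using arg_cong[OF L_sym, of "\<lambda>M. M $$ (i,j)"] carrier_matD[OF Lc] by simp

lemma L_quad:
  assumes q: "q \<in> carrier_vec (m)"
  shows "q \<bullet> (L *\<^sub>v q) = (\<Sum>i<n. ((D *\<^sub>v q) $ i)^2 / \<epsilon> i)"
proof -
  have Dq: "D *\<^sub>v q \<in> carrier_vec n" using mult_mat_vec_carrier[OF Dc q] .
  have EDq: "Einv *\<^sub>v (D *\<^sub>v q) \<in> carrier_vec n" using mult_mat_vec_carrier[OF Einvc Dq] .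
  have "L *\<^sub>v q = D\<^sup>T *\<^sub>v (Einv *\<^sub>v (D *\<^sub>v q))"
  proof -
    have DT: "D\<^sup>T \<in> carrier_mat m n" using Dc by simp
    have DE: "D\<^sup>T * Einv \<in> carrier_mat m n" using DT Einvc by (metis mult_carrier_mat)
    show ?thesis unfolding L_def
      using assoc_mult_mat_vec[OF DE Dc q] assoc_mult_mat_vec[OF DT Einvc Dq] by simp
  qed
  then have "q \<bullet> (L *\<^sub>v q) = (D\<^sup>T *\<^sub>v (Einv *\<^sub>v (D *\<^sub>v q))) \<bullet> q"
  proof -
    have DT: "D\<^sup>T \<in> carrier_mat m n" using Dc by simp
    have "D\<^sup>T *\<^sub>v (Einv *\<^sub>v (D *\<^sub>v q)) \<in> carrier_vec m" by (rule mult_mat_vec_carrier[OF DT mult_mat_vec_carrier[OF Einvc Dq]])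
    then show ?thesis using comm_scalar_prod[OF q] \<open>L *\<^sub>v q = _\<close> by simp
  qed
  also have "\<dots> = (Einv *\<^sub>v (D *\<^sub>v q)) \<bullet> (D *\<^sub>v q)"
    using transpose_vec_mult_scalar[OF Dc q EDq] by simp
  also have "\<dots> = (D *\<^sub>v q) \<bullet> (Einv *\<^sub>v (D *\<^sub>v q))" using comm_scalar_prod[OF Dq EDq] by simp
  also have "\<dots> = (\<Sum>i<n. (1 / \<epsilon> i) * ((D *\<^sub>v q) $ i)^2)" unfolding Einv_def by (rule diag_quad[OF Dq])
  finally show ?thesis by simp
qed

lemma L_pd:
  assumes q: "q \<in> carrier_vec (m)" and q0: "q \<noteq> 0\<^sub>v (m)"
  shows "0 < q \<bullet> (L *\<^sub>v q)"
proof -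
  have Dq0: "D *\<^sub>v q \<noteq> 0\<^sub>v n" using tree_kernel[OF tree n2, of q] q m_eq q0 unfolding D_def by auto
  obtain i where i: "i < n" "(D *\<^sub>v q) $ i \<noteq> 0"
  proof (rule ccontr)
    assume "\<not> thesis"
    with that have "\<forall>i<n. (D *\<^sub>v q) $ i = 0" by blast
    then have "D *\<^sub>v q = 0\<^sub>v n" by (intro eq_vecI) auto
    then show False using Dq0 by simp
  qed
  have "0 < ((D *\<^sub>v q) $ i)^2 / \<epsilon> i" using i epos by simp
  also have "\<dots> \<le> (\<Sum>i<n. ((D *\<^sub>v q) $ i)^2 / \<epsilon> i)"
    using i epos by (intro member_le_sum) auto
  finally show ?thesis using L_quad[OF q] by simp
qed

lemmas Lfacts = sym_eig_facts[OF Lc L_sym m_pos]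

lemma lmin_pos: "0 < lambda_min L"
proof -
  obtain v where v: "v \<in> carrier_vec (m)" "v \<noteq> 0\<^sub>v (m)" "L *\<^sub>v v = lambda_min L \<cdot>\<^sub>v v"
    using Lfacts(2) unfolding eigenvalue_def eigenvector_def by auto
  have "v \<bullet> (L *\<^sub>v v) = lambda_min L * (v \<bullet> v)"
    using v by (simp add: scalar_prod_smult_distrib[of _ "m"])
  then show ?thesis using L_pd[OF v(1,2)] sp_self_gt0[OF v(1,2)] by (simp add: zero_less_mult_iff)
qed

lemma lmin_le_lmax: "lambda_min L \<le> lambda_max L"
  using Lfacts(5)[OF Lfacts(1)] by simp

definition "a = lambda_max Wh"
definition "b = lambda_min Wh"

lemma ab_facts:
  shows "\<And>l. l < m \<Longrightarrow> b \<le> sqrt (w l) \<and> sqrt (w l) \<le> a"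
    and "\<exists>k < m. sqrt (w k) = b"
    and "0 < b" "b \<le> a"
proof -
  have fin: "finite ((\<lambda>l. sqrt (w l)) ` {..<m})" by simp
  have ne: "(\<lambda>l. sqrt (w l)) ` {..<m} \<noteq> {}" using m_pos by auto
  have ea: "a = Max ((\<lambda>l. sqrt (w l)) ` {..<m})" unfolding a_def Wh_def by (rule diag_lambda)
  have eb: "b = Min ((\<lambda>l. sqrt (w l)) ` {..<m})" unfolding b_def Wh_def by (rule diag_lambda)
  show le: "b \<le> sqrt (w l) \<and> sqrt (w l) \<le> a" if "l < m" for l
    unfolding ea eb using fin that by auto
  show ex: "\<exists>k < m. sqrt (w k) = b" unfolding eb using Min_in[OF fin ne] by auto
  then obtain k where k: "k < m" "sqrt (w k) = b" by auto
  have "0 < w k" using k wpos by auto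
  then show "0 < b" using k(2) by (metis real_sqrt_gt_zero)
  show "b \<le> a" using le[OF k(1)] by simp
qed

lemma w_bounds: "l < m \<Longrightarrow> b^2 \<le> w l \<and> w l \<le> a^2"
proof -
  assume l: "l < m"
  have "0 < w l" using wpos l by simp
  moreover have "b \<le> sqrt (w l)" "sqrt (w l) \<le> a" using ab_facts(1)[OF l] by auto
  ultimately show ?thesis using ab_facts(3)
    by (metis power_mono real_sqrt_pow2 less_imp_le order_trans)
qed

end


context sett begin

lemma P_entry:
  assumes "i < m" "j < n"
  shows "(\<sigma>w \<cdot>\<^sub>m (D\<^sup>T * Einvh)) $$ (i, j) = \<sigma>w * (D $$ (j, i) * (1 / sqrt (\<epsilon> j)))"
proof -
  have DT: "D\<^sup>T \<in> carrier_mat m n" using Dc by simp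
  have "D\<^sup>T * Einvh = mat m n (\<lambda>(i, j). D\<^sup>T $$ (i, j) * (1 / sqrt (\<epsilon> j)))"
    unfolding Einvh_def by (rule mat_diag_mult_right[OF DT])
  then show ?thesis using assms by simp
qed

lemma Q_entry:
  assumes "i < m" "j < m"
  shows "((- \<sigma>v) \<cdot>\<^sub>m (L * Wh)) $$ (i, j) = - \<sigma>v * (L $$ (i, j) * sqrt (w j))"
proof -
  have "L * Wh = mat m m (\<lambda>(i, j). L $$ (i, j) * sqrt (w j))"
    unfolding Wh_def by (rule mat_diag_mult_right[OF Lc])
  then show ?thesis using assms by simp
qed

lemma Lq_entry:
  assumes q: "q \<in> carrier_vec m" and j: "j < m"
  shows "(L *\<^sub>v q) $ j = (\<Sum>i<m. L $$ (i, j) * q $ i)"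
  using assms L_entry_sym by (simp add: mult_mat_vec_def scalar_prod_def row_def atLeast0LessThan mult.commute)

lemma Dq_entry:
  assumes q: "q \<in> carrier_vec m" and j: "j < n"
  shows "(D *\<^sub>v q) $ j = (\<Sum>i<m. D $$ (j, i) * q $ i)"
  using assms by (simp add: mult_mat_vec_def scalar_prod_def row_def atLeast0LessThan)

lemma BT_norm:
  assumes q: "q \<in> carrier_vec m"
  shows "(B\<^sup>T *\<^sub>v q) \<bullet> (B\<^sup>T *\<^sub>v q) = NB q"
proof -
  define P where "P = \<sigma>w \<cdot>\<^sub>m (D\<^sup>T * Einvh)"
  define Q where "Q = (- \<sigma>v) \<cdot>\<^sub>m (L * Wh)"
  have Pc: "P \<in> carrier_mat m n" unfolding P_def using Dc Einvhc
    by (metis mult_carrier_mat smult_carrier_mat transpose_carrier_mat)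
  have Qc: "Q \<in> carrier_mat m m" unfolding Q_def using Lc Whc by (metis mult_carrier_mat smult_carrier_mat)
  have "(B\<^sup>T *\<^sub>v q) \<bullet> (B\<^sup>T *\<^sub>v q) = (P\<^sup>T *\<^sub>v q) \<bullet> (P\<^sup>T *\<^sub>v q) + (Q\<^sup>T *\<^sub>v q) \<bullet> (Q\<^sup>T *\<^sub>v q)"
    unfolding B_def P_def[symmetric] Q_def[symmetric] by (rule norm_append[OF Pc Qc q])
  also have "(P\<^sup>T *\<^sub>v q) \<bullet> (P\<^sup>T *\<^sub>v q) = \<sigma>w^2 * (q \<bullet> (L *\<^sub>v q))"
  proof -
    have e: "(P\<^sup>T *\<^sub>v q) $ j = \<sigma>w * (1 / sqrt (\<epsilon> j)) * (D *\<^sub>v q) $ j" if j: "j < n" for j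
    proof -
      have "(P\<^sup>T *\<^sub>v q) $ j = (\<Sum>i<m. P $$ (i, j) * q $ i)" by (rule tvec_entry[OF Pc q j])
      also have "\<dots> = (\<Sum>i<m. \<sigma>w * (1 / sqrt (\<epsilon> j)) * (D $$ (j, i) * q $ i))"
        unfolding P_def by (intro sum.cong refl, subst P_entry) (use j in auto)
      also have "\<dots> = \<sigma>w * (1 / sqrt (\<epsilon> j)) * (D *\<^sub>v q) $ j"
        using Dq_entry[OF q j] by (simp add: sum_distrib_left)
      finally show ?thesis .
    qed
    have "(P\<^sup>T *\<^sub>v q) \<bullet> (P\<^sup>T *\<^sub>v q) = (\<Sum>j<n. ((P\<^sup>T *\<^sub>v q) $ j)^2)"
      using Pc by (simp add: scalar_prod_def atLeast0LessThan power2_eq_square)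
    also have "\<dots> = (\<Sum>j<n. \<sigma>w^2 * (((D *\<^sub>v q) $ j)^2 / \<epsilon> j))"
    proof (intro sum.cong refl)
      fix j assume "j \<in> {..<n}"
      then have j: "j < n" and ej: "0 < \<epsilon> j" using epos by auto
      show "((P\<^sup>T *\<^sub>v q) $ j)^2 = \<sigma>w^2 * (((D *\<^sub>v q) $ j)^2 / \<epsilon> j)"
        unfolding e[OF j] using ej by (simp add: power_mult_distrib power_divide)
    qed
    also have "\<dots> = \<sigma>w^2 * (q \<bullet> (L *\<^sub>v q))" using L_quad[OF q] by (simp add: sum_distrib_left)
    finally show ?thesis .
  qed
  also have "(Q\<^sup>T *\<^sub>v q) \<bullet> (Q\<^sup>T *\<^sub>v q) = \<sigma>v^2 * (\<Sum>l<m. w l * ((L *\<^sub>v q) $ l)^2)"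
  proof -
    have e: "(Q\<^sup>T *\<^sub>v q) $ j = - \<sigma>v * sqrt (w j) * (L *\<^sub>v q) $ j" if j: "j < m" for j
    proof -
      have "(Q\<^sup>T *\<^sub>v q) $ j = (\<Sum>i<m. Q $$ (i, j) * q $ i)" by (rule tvec_entry[OF Qc q j])
      also have "\<dots> = (\<Sum>i<m. - \<sigma>v * sqrt (w j) * (L $$ (i, j) * q $ i))"
        unfolding Q_def by (intro sum.cong refl, subst Q_entry) (use j in auto)
      also have "\<dots> = - \<sigma>v * sqrt (w j) * (L *\<^sub>v q) $ j"
        using Lq_entry[OF q j] by (simp add: sum_distrib_left)
      finally show ?thesis .
    qed
    have "(Q\<^sup>T *\<^sub>v q) \<bullet> (Q\<^sup>T *\<^sub>v q) = (\<Sum>j<m. ((Q\<^sup>T *\<^sub>v q) $ j)^2)"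
      using Qc by (simp add: scalar_prod_def atLeast0LessThan power2_eq_square)
    also have "\<dots> = (\<Sum>j<m. \<sigma>v^2 * (w j * ((L *\<^sub>v q) $ j)^2))"
    proof (intro sum.cong refl)
      fix j assume "j \<in> {..<m}"
      then have j: "j < m" and wj: "0 < w j" using wpos by auto
      show "((Q\<^sup>T *\<^sub>v q) $ j)^2 = \<sigma>v^2 * (w j * ((L *\<^sub>v q) $ j)^2)"
        unfolding e[OF j] using wj by (simp add: power_mult_distrib)
    qed
    also have "\<dots> = \<sigma>v^2 * (\<Sum>l<m. w l * ((L *\<^sub>v q) $ l)^2)" by (simp add: sum_distrib_left)
    finally show ?thesis .
  qed
  finally show ?thesis unfolding NB_def .
qed


lemma sp_sum: "x \<in> carrier_vec m \<Longrightarrow> y \<in> carrier_vec m \<Longrightarrow> x \<bullet> y = (\<Sum>i<m. x $ i * y $ i)"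
  by (simp add: scalar_prod_def atLeast0LessThan)

lemma quad_le_norm:
  assumes q: "q \<in> carrier_vec m"
  shows "q \<bullet> (L *\<^sub>v q) \<le> ((L *\<^sub>v q) \<bullet> (L *\<^sub>v q)) / lambda_min L"
proof -
  have Lq: "L *\<^sub>v q \<in> carrier_vec m" using mult_mat_vec_carrier[OF Lc q] .
  have cs: "(q \<bullet> (L *\<^sub>v q))^2 \<le> (q \<bullet> q) * ((L *\<^sub>v q) \<bullet> (L *\<^sub>v q))" by (rule cs_vec[OF q Lq])
  have lm: "lambda_min L * (q \<bullet> q) \<le> q \<bullet> (L *\<^sub>v q)" by (rule Lfacts(4)[OF q])
  have lp: "0 < lambda_min L" by (rule lmin_pos)
  have nn: "0 \<le> (L *\<^sub>v q) \<bullet> (L *\<^sub>v q)" by (rule sp_self_ge0)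
  show ?thesis
  proof (cases "q \<bullet> (L *\<^sub>v q) \<le> 0")
    case True then show ?thesis using nn lp by (meson divide_nonneg_pos order_trans)
  next
    case False
    then have pos: "0 < q \<bullet> (L *\<^sub>v q)" by simp
    have "q \<bullet> q \<le> q \<bullet> (L *\<^sub>v q) / lambda_min L" using lm lp by (simp add: field_simps)
    then have "(q \<bullet> (L *\<^sub>v q))^2 \<le> (q \<bullet> (L *\<^sub>v q) / lambda_min L) * ((L *\<^sub>v q) \<bullet> (L *\<^sub>v q))"
      using cs nn by (meson mult_right_mono order_trans)
    moreover have e: "(q \<bullet> (L *\<^sub>v q) / lambda_min L) * ((L *\<^sub>v q) \<bullet> (L *\<^sub>v q))
        = (q \<bullet> (L *\<^sub>v q)) * (((L *\<^sub>v q) \<bullet> (L *\<^sub>v q)) / lambda_min L)" by simp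
    ultimately have "(q \<bullet> (L *\<^sub>v q)) * (q \<bullet> (L *\<^sub>v q)) \<le> (q \<bullet> (L *\<^sub>v q)) * (((L *\<^sub>v q) \<bullet> (L *\<^sub>v q)) / lambda_min L)"
      unfolding power2_eq_square by simp
    then show ?thesis using pos by (rule mult_left_le_imp_le)
  qed
qed

definition "U0 = (\<sigma>w\<^sup>2 + \<sigma>v\<^sup>2 * lambda_min L * b ^ 2) / (lambda_min L * b ^ 4)"

lemma U0_alt: "U0 * b^2 = \<sigma>w^2 / (lambda_min L * b^2) + \<sigma>v^2"
  unfolding U0_def using lmin_pos ab_facts(3) by (simp add: field_simps power2_eq_square power4_eq_xxxx)

lemma U0_nonneg: "0 \<le> U0"
  unfolding U0_def using lmin_pos ab_facts(3) by (intro divide_nonneg_pos) (auto intro: add_nonneg_nonneg)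

lemma NB_le:
  assumes q: "q \<in> carrier_vec m"
  shows "NB q \<le> U0 * b^2 * (\<Sum>l<m. w l * ((L *\<^sub>v q) $ l)^2)"
proof -
  define p where "p = L *\<^sub>v q"
  have p: "p \<in> carrier_vec m" unfolding p_def using mult_mat_vec_carrier[OF Lc q] .
  have lp: "0 < lambda_min L" by (rule lmin_pos)
  have bp: "0 < b" by (rule ab_facts(3))
  have pp: "p \<bullet> p = (\<Sum>l<m. (p $ l)^2)" using sp_sum[OF p p] by (simp add: power2_eq_square)
  have wsum: "b^2 * (p \<bullet> p) \<le> (\<Sum>l<m. w l * (p $ l)^2)"
    unfolding pp sum_distrib_left using w_bounds by (intro sum_mono mult_right_mono) auto
  have "q \<bullet> (L *\<^sub>v q) \<le> (p \<bullet> p) / lambda_min L" using quad_le_norm[OF q] p_def by simp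
  also have "\<dots> \<le> (\<Sum>l<m. w l * (p $ l)^2) / (lambda_min L * b^2)"
    using wsum lp bp by (simp add: field_simps)
  finally have "\<sigma>w^2 * (q \<bullet> (L *\<^sub>v q)) \<le> \<sigma>w^2 * ((\<Sum>l<m. w l * (p $ l)^2) / (lambda_min L * b^2))"
    by (intro mult_left_mono) auto
  then show ?thesis unfolding NB_def U0_alt p_def[symmetric] by (simp add: algebra_simps)
qed

lemma R1:
  assumes qa: "qa \<in> carrier_vec m" and qb: "qb \<in> carrier_vec m"
  shows "NB qa + NB qb \<le> U0 * (\<Sum>i<m. (\<omega> * qb $ i + w i * (L *\<^sub>v qa) $ i)^2
                                     + (- \<omega> * qa $ i + w i * (L *\<^sub>v qb) $ i)^2)"
proof -
  define p where "p = L *\<^sub>v qa"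
  define r where "r = L *\<^sub>v qb"
  define T where "T i = (\<omega> * qb $ i + w i * p $ i)^2 + (- \<omega> * qa $ i + w i * r $ i)^2" for i
  have bp: "0 < b" by (rule ab_facts(3))
  have cross: "(\<Sum>i<m. qb $ i * p $ i) = (\<Sum>i<m. qa $ i * r $ i)"
    using sym_sp[OF Lc L_sym qa qb] sp_sum[OF qb] sp_sum[OF qa] qa qb
    unfolding p_def r_def by (simp add: mult_mat_vec_carrier[OF Lc])
  have S1: "(\<Sum>i<m. w i * ((p $ i)^2 + (r $ i)^2)) \<le> (\<Sum>i<m. T i / w i)"
  proof -
    have ex: "T i / w i = \<omega>^2 * ((qa $ i)^2 + (qb $ i)^2) / w i + w i * ((p $ i)^2 + (r $ i)^2)
        + 2 * \<omega> * (qb $ i * p $ i - qa $ i * r $ i)" if "i < m" for i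
    proof -
      have "0 < w i" using wpos that by auto
      then show ?thesis unfolding T_def by (simp add: field_simps power2_eq_square)
    qed
    have "(\<Sum>i<m. T i / w i) = (\<Sum>i<m. \<omega>^2 * ((qa $ i)^2 + (qb $ i)^2) / w i)
        + (\<Sum>i<m. w i * ((p $ i)^2 + (r $ i)^2))
        + 2 * \<omega> * ((\<Sum>i<m. qb $ i * p $ i) - (\<Sum>i<m. qa $ i * r $ i))"
    proof -
      have "(\<Sum>i<m. 2 * \<omega> * (qb $ i * p $ i - qa $ i * r $ i))
          = 2 * \<omega> * ((\<Sum>i<m. qb $ i * p $ i) - (\<Sum>i<m. qa $ i * r $ i))"
        by (simp only: sum_subtractf[symmetric] sum_distrib_left)
      then show ?thesis by (simp add: ex sum.distrib)
    qed
    also have "\<dots> = (\<Sum>i<m. \<omega>^2 * ((qa $ i)^2 + (qb $ i)^2) / w i) + (\<Sum>i<m. w i * ((p $ i)^2 + (r $ i)^2))"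
      using cross by simp
    also have "\<dots> \<ge> (\<Sum>i<m. w i * ((p $ i)^2 + (r $ i)^2))"
    proof -
      have "0 \<le> (\<Sum>i<m. \<omega>^2 * ((qa $ i)^2 + (qb $ i)^2) / w i)"
        using wpos by (intro sum_nonneg divide_nonneg_pos) auto
      then show ?thesis by simp
    qed
    finally show ?thesis .
  qed
  have S2: "b^2 * (\<Sum>i<m. T i / w i) \<le> (\<Sum>i<m. T i)"
    unfolding sum_distrib_left
  proof (intro sum_mono)
    fix i assume "i \<in> {..<m}"
    then have wi: "0 < w i" "b^2 \<le> w i" using wpos w_bounds by auto
    have T0: "0 \<le> T i" unfolding T_def by simp
    have "b^2 * (T i / w i) = T i * (b^2 / w i)" by simp
    also have "\<dots> \<le> T i * 1" using wi T0 by (intro mult_left_mono) auto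
    finally show "b^2 * (T i / w i) \<le> T i" by simp
  qed
  have "NB qa + NB qb \<le> U0 * b^2 * (\<Sum>i<m. w i * (p $ i)^2) + U0 * b^2 * (\<Sum>i<m. w i * (r $ i)^2)"
    using NB_le[OF qa] NB_le[OF qb] unfolding p_def r_def by simp
  also have "\<dots> = U0 * (b^2 * (\<Sum>i<m. w i * ((p $ i)^2 + (r $ i)^2)))"
    by (simp add: algebra_simps sum.distrib)
  also have "\<dots> \<le> U0 * (b^2 * (\<Sum>i<m. T i / w i))"
    using S1 U0_nonneg by (intro mult_left_mono) auto
  also have "\<dots> \<le> U0 * (\<Sum>i<m. T i)" using S2 U0_nonneg by (intro mult_left_mono) auto
  finally show ?thesis unfolding T_def p_def r_def .
qed

end

context sett begin

definition "Linv = mat_inv L"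

lemma Linv_facts: "Linv \<in> carrier_mat m m" "L * Linv = 1\<^sub>m m" "Linv * L = 1\<^sub>m m"
proof -
  have ker: "v = 0\<^sub>v m" if "v \<in> carrier_vec m" "L *\<^sub>v v = 0\<^sub>v m" for v
  proof (rule ccontr)
    assume "v \<noteq> 0\<^sub>v m"
    from L_pd[OF that(1) this] that show False by simp
  qed
  obtain X where X: "X \<in> carrier_mat m m" "L * X = 1\<^sub>m m" "X * L = 1\<^sub>m m"
    using inv_from_kernel[OF Lc ker] by blast
  have "Linv = X" unfolding Linv_def by (rule mat_inv_eq[OF Lc X(1,2)])
  then show "Linv \<in> carrier_mat m m" "L * Linv = 1\<^sub>m m" "Linv * L = 1\<^sub>m m" using X by auto
qed

lemma LinvT_L: "Linv\<^sup>T * L = 1\<^sub>m m"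
proof -
  have LT: "L\<^sup>T \<in> carrier_mat m m" using L_sym Lc by simp
  have "(L\<^sup>T * Linv)\<^sup>T = Linv\<^sup>T * L\<^sup>T\<^sup>T"
    by (rule transpose_mult[OF LT Linv_facts(1)])
  then have "Linv\<^sup>T * L = (L * Linv)\<^sup>T" using L_sym by (simp add: transpose_transpose)
  also have "\<dots> = 1\<^sub>m m" using Linv_facts(2) by (simp add: transpose_one)
  finally show ?thesis .
qed

definition "S0 = Winv * Linv * B"
definition "G0 = S0 * S0\<^sup>T"

lemma S0c[simp]: "S0 \<in> carrier_mat m (n + m)"
  unfolding S0_def using Winvc Linv_facts(1) Bc by (metis mult_carrier_mat)

lemma G0c[simp]: "G0 \<in> carrier_mat m m"
  unfolding G0_def using S0c by (metis mult_carrier_mat transpose_carrier_mat)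

lemma G0_sym: "G0\<^sup>T = G0"
  unfolding G0_def using transpose_mult[of S0 m "n + m" "S0\<^sup>T" m] S0c
  by (simp add: transpose_transpose)

lemma Winv_W:
  assumes v: "v \<in> carrier_vec m"
  shows "Winv *\<^sub>v (W *\<^sub>v v) = v"
proof -
  have Wv: "W *\<^sub>v v = vec m (\<lambda>i. w i * v $ i)" unfolding W_def by (rule diag_mult_vec[OF v])
  have "Winv *\<^sub>v (W *\<^sub>v v) = vec m (\<lambda>i. 1 / w i * (W *\<^sub>v v) $ i)"
    unfolding Winv_def by (rule diag_mult_vec) (use Wv in simp)
  also have "\<dots> = v" using v wpos Wv by (intro eq_vecI) auto
  finally show ?thesis .
qed

lemma S0T_y:
  assumes q: "q \<in> carrier_vec m"
  shows "S0\<^sup>T *\<^sub>v (W *\<^sub>v (L *\<^sub>v q)) = B\<^sup>T *\<^sub>v q"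
proof -
  have Lq: "L *\<^sub>v q \<in> carrier_vec m" using mult_mat_vec_carrier[OF Lc q] .
  have WLq: "W *\<^sub>v (L *\<^sub>v q) \<in> carrier_vec m" using mult_mat_vec_carrier[OF Wc Lq] .
  have WiL: "Winv * Linv \<in> carrier_mat m m" using Winvc Linv_facts(1) by (metis mult_carrier_mat)
  have BT: "B\<^sup>T \<in> carrier_mat (n + m) m" using Bc by simp
  have LiT: "Linv\<^sup>T \<in> carrier_mat m m" using Linv_facts(1) by simp
  have WiT: "Winv\<^sup>T = Winv" by (simp add: Winv_def diag_transpose)
  have "S0\<^sup>T = B\<^sup>T * (Winv * Linv)\<^sup>T" unfolding S0_def by (rule transpose_mult[OF WiL Bc])
  also have "(Winv * Linv)\<^sup>T = Linv\<^sup>T * Winv" using transpose_mult[OF Winvc Linv_facts(1)] WiT by simp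
  finally have e: "S0\<^sup>T = B\<^sup>T * (Linv\<^sup>T * Winv)" .
  have "S0\<^sup>T *\<^sub>v (W *\<^sub>v (L *\<^sub>v q)) = B\<^sup>T *\<^sub>v (Linv\<^sup>T *\<^sub>v (Winv *\<^sub>v (W *\<^sub>v (L *\<^sub>v q))))"
    unfolding e using assoc_mult_mat_vec[OF BT mult_carrier_mat[OF LiT Winvc] WLq]
      assoc_mult_mat_vec[OF LiT Winvc WLq] by simp
  also have "Winv *\<^sub>v (W *\<^sub>v (L *\<^sub>v q)) = L *\<^sub>v q" by (rule Winv_W[OF Lq])
  also have "Linv\<^sup>T *\<^sub>v (L *\<^sub>v q) = q"
    using assoc_mult_mat_vec[OF LiT Lc q] LinvT_L q by simp
  finally show ?thesis .
qed

lemma G0_quad: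
  assumes q: "q \<in> carrier_vec m"
  shows "(W *\<^sub>v (L *\<^sub>v q)) \<bullet> (G0 *\<^sub>v (W *\<^sub>v (L *\<^sub>v q))) = NB q"
proof -
  define y where "y = W *\<^sub>v (L *\<^sub>v q)"
  have y: "y \<in> carrier_vec m" unfolding y_def using mult_mat_vec_carrier[OF Wc mult_mat_vec_carrier[OF Lc q]] .
  have S0T: "S0\<^sup>T \<in> carrier_mat (n + m) m" using S0c by simp
  have Sy: "S0\<^sup>T *\<^sub>v y \<in> carrier_vec (n + m)" using mult_mat_vec_carrier[OF S0T y] .
  have "y \<bullet> (G0 *\<^sub>v y) = y \<bullet> (S0 *\<^sub>v (S0\<^sup>T *\<^sub>v y))"
    unfolding G0_def using assoc_mult_mat_vec[OF S0c S0T y] by simp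
  also have "\<dots> = (S0\<^sup>T *\<^sub>v y) \<bullet> (S0\<^sup>T *\<^sub>v y)" using transpose_vec_mult_scalar[OF S0c Sy y] by simp
  also have "\<dots> = (B\<^sup>T *\<^sub>v q) \<bullet> (B\<^sup>T *\<^sub>v q)" unfolding y_def S0T_y[OF q] ..
  also have "\<dots> = NB q" by (rule BT_norm[OF q])
  finally show ?thesis unfolding y_def .
qed

lemmas G0facts = sym_eig_facts[OF G0c G0_sym m_pos]


definition "L1v = (\<sigma>w\<^sup>2 + \<sigma>v\<^sup>2 * lambda_min L * a ^ 2) / (lambda_min L * a ^ 4)"
definition "L2v = (\<sigma>w\<^sup>2 + \<sigma>v\<^sup>2 * lambda_max L * a * b) / (lambda_max L * a ^ 3 * b)"

lemma a_pos: "0 < a" using ab_facts(3,4) by simp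
lemma lmax_pos: "0 < lambda_max L" using lmin_pos lmin_le_lmax by simp

lemma L1_alt: "L1v = \<sigma>w^2 / (lambda_min L * a^4) + \<sigma>v^2 / a^2"
  unfolding L1v_def using lmin_pos a_pos by (simp add: field_simps power2_eq_square power4_eq_xxxx)

lemma L2_alt: "L2v = \<sigma>w^2 / (lambda_max L * a^3 * b) + \<sigma>v^2 / a^2"
  unfolding L2v_def using lmax_pos a_pos ab_facts(3) by (simp add: field_simps power2_eq_square power3_eq_cube)

lemma lower1: "L1v \<le> lambda_max G0"
proof -
  define lm where "lm = lambda_min L"
  have lp: "0 < lm" unfolding lm_def by (rule lmin_pos)
  have ap: "0 < a" by (rule a_pos)
  obtain q where q: "q \<in> carrier_vec m" "q \<noteq> 0\<^sub>v m" "L *\<^sub>v q = lm \<cdot>\<^sub>v q"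
    using Lfacts(2) unfolding eigenvalue_def eigenvector_def lm_def by auto
  define y where "y = W *\<^sub>v (L *\<^sub>v q)"
  have Lq: "L *\<^sub>v q \<in> carrier_vec m" using q by simp
  have ye: "y = vec m (\<lambda>i. w i * (lm * q $ i))"
    unfolding y_def W_def using diag_mult_vec[OF Lq, of w] q(3) q(1) by (simp, intro eq_vecI) auto
  have yc: "y \<in> carrier_vec m" unfolding ye by simp
  define t where "t i = (q $ i)^2" for i
  have yy: "y \<bullet> y = (\<Sum>i<m. (w i)^2 * lm^2 * t i)"
    unfolding ye t_def by (simp add: scalar_prod_def atLeast0LessThan power2_eq_square algebra_simps)
  have qLq: "q \<bullet> (L *\<^sub>v q) = lm * (\<Sum>i<m. t i)"
    using q unfolding t_def by (simp add: scalar_prod_smult_distrib[of _ m] sp_sum power2_eq_square sum_distrib_left algebra_simps)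
  have NBq: "NB q = \<sigma>w^2 * (lm * (\<Sum>i<m. t i)) + \<sigma>v^2 * (\<Sum>i<m. w i * lm^2 * t i)"
    unfolding NB_def qLq using q(3) q(1) unfolding t_def by (simp add: power_mult_distrib algebra_simps)
  have key: "L1v * (y \<bullet> y) \<le> NB q"
  proof -
    have "L1v * (y \<bullet> y) = (\<Sum>i<m. \<sigma>w^2 * lm * t i * ((w i)^2 / a^4) + \<sigma>v^2 * lm^2 * t i * ((w i)^2 / a^2))"
      unfolding L1_alt yy sum_distrib_left lm_def[symmetric] using lp ap
      by (intro sum.cong refl) (simp add: field_simps power2_eq_square power4_eq_xxxx)
    also have "\<dots> \<le> (\<Sum>i<m. \<sigma>w^2 * lm * t i * 1 + \<sigma>v^2 * lm^2 * t i * w i)"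
    proof (intro sum_mono add_mono mult_left_mono)
      fix i assume "i \<in> {..<m}"
      then have wi: "0 < w i" "w i \<le> a^2" using wpos w_bounds by auto
      have "(w i)^2 \<le> (a^2)^2" using wi by (intro power_mono) auto
      then show "(w i)^2 / a^4 \<le> 1" using ap by (simp add: power_mult[symmetric])
      have "(w i)^2 \<le> w i * a^2" using wi by (simp add: power2_eq_square)
      then show "(w i)^2 / a^2 \<le> w i" using ap by (simp add: divide_le_eq)
    qed (use lp t_def in auto)
    also have "\<dots> = NB q" unfolding NBq by (simp add: sum.distrib sum_distrib_left algebra_simps)
    finally show ?thesis .
  qed
  have up: "NB q \<le> lambda_max G0 * (y \<bullet> y)"
    using G0_quad[OF q(1)] G0facts(3)[OF yc] unfolding y_def by simp
  have ypos: "0 < y \<bullet> y"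
  proof -
    have "y \<noteq> 0\<^sub>v m"
    proof
      assume "y = 0\<^sub>v m"
      then have "W *\<^sub>v (L *\<^sub>v q) = 0\<^sub>v m" unfolding y_def .
      then have "Winv *\<^sub>v (W *\<^sub>v (L *\<^sub>v q)) = 0\<^sub>v m" using mat_vec_zero[OF Winvc] by simp
      then have "lm \<cdot>\<^sub>v q = 0\<^sub>v m" using Winv_W[OF Lq] q(3) by simp
      then have "\<And>i. i < m \<Longrightarrow> lm * q $ i = 0" using q(1) by (metis index_smult_vec(1) index_zero_vec(1) carrier_vecD)
      then have "q = 0\<^sub>v m" using lp q(1) by (intro eq_vecI) auto
      then show False using q(2) by simp
    qed
    then show ?thesis using sp_self_gt0[OF yc] by simp
  qed
  show ?thesis using key up ypos by (meson mult_le_cancel_right_pos order_trans)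
qed


lemma lower2: "L2v \<le> lambda_max G0"
proof -
  define lM where "lM = lambda_max L"
  have lp: "0 < lM" unfolding lM_def by (rule lmax_pos)
  have ap: "0 < a" by (rule a_pos)
  have bp: "0 < b" by (rule ab_facts(3))
  have ba: "b \<le> a" by (rule ab_facts(4))
  obtain k where k: "k < m" "sqrt (w k) = b" using ab_facts(2) by auto
  have wk: "w k = b^2" using k wpos by (metis real_sqrt_pow2 less_imp_le)
  define ek :: "real vec" where "ek = unit_vec m k"
  have ekc: "ek \<in> carrier_vec m" unfolding ek_def by simp
  define q where "q = Linv *\<^sub>v ek"
  have qc: "q \<in> carrier_vec m" unfolding q_def using mult_mat_vec_carrier[OF Linv_facts(1) ekc] .
  have Lq: "L *\<^sub>v q = ek" unfolding q_def using assoc_mult_mat_vec[OF Lc Linv_facts(1) ekc] Linv_facts(2) ekc by simp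
  have ee: "ek \<bullet> ek = 1" unfolding ek_def using k(1) by (simp add: scalar_prod_right_unit)
  define y where "y = W *\<^sub>v (L *\<^sub>v q)"
  have ye: "y = vec m (\<lambda>i. w i * ek $ i)" unfolding y_def Lq W_def by (rule diag_mult_vec[OF ekc])
  have yc: "y \<in> carrier_vec m" unfolding ye by simp
  have yy: "y \<bullet> y = b^4"
  proof -
    have "y \<bullet> y = (\<Sum>i<m. (w i * ek $ i)^2)" unfolding ye by (simp add: scalar_prod_def atLeast0LessThan power2_eq_square)
    also have "\<dots> = (\<Sum>i<m. if i = k then (w k)^2 else 0)" unfolding ek_def by (intro sum.cong refl) (use k(1) in auto)
    also have "\<dots> = (w k)^2" using k(1) by simp
    finally show ?thesis unfolding wk by simp
  qed
  have NBq: "NB q = \<sigma>w^2 * (q \<bullet> (L *\<^sub>v q)) + \<sigma>v^2 * b^2"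
  proof -
    have "(\<Sum>l<m. w l * ((L *\<^sub>v q) $ l)^2) = (\<Sum>l<m. if l = k then w k else 0)"
      unfolding Lq ek_def by (intro sum.cong refl) (use k(1) in auto)
    also have "\<dots> = b^2" using k(1) wk by simp
    finally show ?thesis unfolding NB_def by simp
  qed
  have psd: "0 \<le> z \<bullet> (L *\<^sub>v z)" if "z \<in> carrier_vec m" for z
    using Lfacts(4)[OF that] lmin_pos sp_self_ge0[of z] by (meson mult_nonneg_nonneg less_imp_le order_trans)
  have cs: "(q \<bullet> (L *\<^sub>v ek))^2 \<le> (q \<bullet> (L *\<^sub>v q)) * (ek \<bullet> (L *\<^sub>v ek))"
    by (rule semi_cs[OF Lc L_sym psd qc ekc])
  have "q \<bullet> (L *\<^sub>v ek) = ek \<bullet> (L *\<^sub>v q)" by (rule sym_sp[OF Lc L_sym ekc qc])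
  then have q1: "q \<bullet> (L *\<^sub>v ek) = 1" using Lq ee by simp
  have eLe: "ek \<bullet> (L *\<^sub>v ek) \<le> lM" using Lfacts(3)[OF ekc] ee unfolding lM_def by simp
  have qLq0: "0 \<le> q \<bullet> (L *\<^sub>v q)" by (rule psd[OF qc])
  have "1 \<le> (q \<bullet> (L *\<^sub>v q)) * lM"
    using cs q1 eLe qLq0 by (metis mult_left_mono one_power2 order_trans)
  then have qL: "1 / lM \<le> q \<bullet> (L *\<^sub>v q)" using lp by (simp add: divide_le_eq mult.commute)
  have key: "L2v * b^4 \<le> NB q"
  proof -
    have "L2v * b^4 = \<sigma>w^2 * (1 / lM) * (b / a)^3 + \<sigma>v^2 * b^2 * (b / a)^2"
      unfolding L2_alt lM_def[symmetric] using lp ap bp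
      by (simp add: field_simps power2_eq_square power3_eq_cube power4_eq_xxxx)
    also have "\<dots> \<le> \<sigma>w^2 * (q \<bullet> (L *\<^sub>v q)) * 1 + \<sigma>v^2 * b^2 * 1"
    proof (intro add_mono mult_mono mult_left_mono)
      have "b / a \<le> 1" using ap ba by simp
      moreover have "0 \<le> b / a" using ap bp by simp
      ultimately show "(b / a)^3 \<le> 1" "(b / a)^2 \<le> 1" by (simp_all add: power_le_one)
    qed (use qL lp qLq0 ap bp in auto)
    also have "\<dots> = NB q" unfolding NBq by simp
    finally show ?thesis .
  qed
  have up: "NB q \<le> lambda_max G0 * (y \<bullet> y)"
    using G0_quad[OF qc] G0facts(3)[OF yc] unfolding y_def by simp
  have b4: "0 < b^4" using bp by simp
  show ?thesis using key up yy b4 by (metis mult_le_cancel_right_pos order_trans)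
qed

lemma lower: "max L1v L2v \<le> lambda_max G0"
  using lower1 lower2 by simp

end

lemma dim_vre[simp]: "dim_vec (vre z) = dim_vec z" and dim_vim[simp]: "dim_vec (vim z) = dim_vec z"
  by (simp_all add: vre_def vim_def)

lemma vre_add: "dim_vec z2 = dim_vec z1 \<Longrightarrow> vre (z1 + z2) = vre z1 + vre z2"
  and vim_add: "dim_vec z2 = dim_vec z1 \<Longrightarrow> vim (z1 + z2) = vim z1 + vim z2"
  by (auto intro!: eq_vecI simp: vre_def vim_def)

lemma vre_smult: "vre (c \<cdot>\<^sub>v z) = Re c \<cdot>\<^sub>v vre z - Im c \<cdot>\<^sub>v vim z"
  and vim_smult: "vim (c \<cdot>\<^sub>v z) = Im c \<cdot>\<^sub>v vre z + Re c \<cdot>\<^sub>v vim z"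
  by (auto intro!: eq_vecI simp: vre_def vim_def)

lemma smult_one_mat_vec:
  fixes z :: "'a::comm_ring_1 vec"
  assumes "z \<in> carrier_vec k"
  shows "(c \<cdot>\<^sub>m 1\<^sub>m k) *\<^sub>v z = c \<cdot>\<^sub>v z"
proof (rule eq_vecI)
  fix i assume "i < dim_vec (c \<cdot>\<^sub>v z)"
  then have i: "i < k" using assms by simp
  have "(\<Sum>j = 0..<k. c * (if i = j then 1 else 0) * z $ j) = (\<Sum>j = 0..<k. if j = i then c * z $ i else 0)"
    by (intro sum.cong) auto
  also have "\<dots> = c * z $ i" using i by simp
  finally show "((c \<cdot>\<^sub>m 1\<^sub>m k) *\<^sub>v z) $ i = (c \<cdot>\<^sub>v z) $ i"
    using i assms by (simp add: mult_mat_vec_def scalar_prod_def row_def one_mat_def)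
qed (use assms in simp)

lemma adj_of_real: "mat_adjoint (map_mat complex_of_real M) = map_mat complex_of_real M\<^sup>T"
  by (rule eq_matI) auto

lemma adj_one: "mat_adjoint (1\<^sub>m k :: complex mat) = 1\<^sub>m k"
  by (rule eq_matI) auto

context sett begin

definition "Xm s = s \<cdot>\<^sub>m 1\<^sub>m m + map_mat complex_of_real (L * W)"
definition "Sig s = mat_inv (Xm s) * map_mat complex_of_real B"

lemma Sig_eq: "Sigma_tilde n e w \<epsilon> \<sigma>w \<sigma>v s = Sig s"
  unfolding Sigma_tilde_def Let_def Sig_def Xm_def m_eq B_def L_def D_def W_def Wh_def Einv_def Einvh_def ..

lemma LWc: "L * W \<in> carrier_mat m m" using Lc Wc by (metis mult_carrier_mat)
lemma WLc: "W * L \<in> carrier_mat m m" using Lc Wc by (metis mult_carrier_mat)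

lemma Xmc: "Xm s \<in> carrier_mat m m"
  unfolding Xm_def using LWc by simp

lemma LW_T: "(L * W)\<^sup>T = W * L"
  using transpose_mult[OF Lc Wc] L_sym by (simp add: W_def diag_transpose)

lemma Xm_adj: "mat_adjoint (Xm s) = cnj s \<cdot>\<^sub>m 1\<^sub>m m + map_mat complex_of_real (W * L)"
proof -
  have "mat_adjoint (Xm s) = cnj s \<cdot>\<^sub>m 1\<^sub>m m + map_mat complex_of_real ((L * W)\<^sup>T)"
    unfolding Xm_def using LWc by (intro eq_matI) auto
  then show ?thesis using LW_T by simp
qed

lemma Xm_vec:
  assumes z: "z \<in> carrier_vec m"
  shows "vre (Xm s *\<^sub>v z) = Re s \<cdot>\<^sub>v vre z - Im s \<cdot>\<^sub>v vim z + L *\<^sub>v (W *\<^sub>v vre z)"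
    and "vim (Xm s *\<^sub>v z) = Im s \<cdot>\<^sub>v vre z + Re s \<cdot>\<^sub>v vim z + L *\<^sub>v (W *\<^sub>v vim z)"
proof -
  have e: "Xm s *\<^sub>v z = s \<cdot>\<^sub>v z + map_mat complex_of_real (L * W) *\<^sub>v z"
    unfolding Xm_def using z LWc by (simp add: add_mult_distrib_mat_vec[of _ m m] smult_one_mat_vec)
  have d: "dim_vec (map_mat complex_of_real (L * W) *\<^sub>v z) = dim_vec (s \<cdot>\<^sub>v z)" using z LWc by simp
  show "vre (Xm s *\<^sub>v z) = Re s \<cdot>\<^sub>v vre z - Im s \<cdot>\<^sub>v vim z + L *\<^sub>v (W *\<^sub>v vre z)"
    unfolding e vre_add[OF d] vre_smult re_mult(1)[OF LWc z]
    using assoc_mult_mat_vec[OF Lc Wc vre_carrier[OF z]] by simp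
  show "vim (Xm s *\<^sub>v z) = Im s \<cdot>\<^sub>v vre z + Re s \<cdot>\<^sub>v vim z + L *\<^sub>v (W *\<^sub>v vim z)"
    unfolding e vim_add[OF d] vim_smult re_mult(2)[OF LWc z]
    using assoc_mult_mat_vec[OF Lc Wc vim_carrier[OF z]] by simp
qed

lemma Xm_adj_vec:
  assumes z: "z \<in> carrier_vec m"
  shows "vre (mat_adjoint (Xm s) *\<^sub>v z) = Re s \<cdot>\<^sub>v vre z + Im s \<cdot>\<^sub>v vim z + W *\<^sub>v (L *\<^sub>v vre z)"
    and "vim (mat_adjoint (Xm s) *\<^sub>v z) = - Im s \<cdot>\<^sub>v vre z + Re s \<cdot>\<^sub>v vim z + W *\<^sub>v (L *\<^sub>v vim z)"
proof -
  have e: "mat_adjoint (Xm s) *\<^sub>v z = cnj s \<cdot>\<^sub>v z + map_mat complex_of_real (W * L) *\<^sub>v z"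
    unfolding Xm_adj using z WLc by (simp add: add_mult_distrib_mat_vec[of _ m m] smult_one_mat_vec)
  have d: "dim_vec (map_mat complex_of_real (W * L) *\<^sub>v z) = dim_vec (cnj s \<cdot>\<^sub>v z)" using z WLc by simp
  show "vre (mat_adjoint (Xm s) *\<^sub>v z) = Re s \<cdot>\<^sub>v vre z + Im s \<cdot>\<^sub>v vim z + W *\<^sub>v (L *\<^sub>v vre z)"
    unfolding e vre_add[OF d] vre_smult re_mult(1)[OF WLc z]
    using assoc_mult_mat_vec[OF Wc Lc vre_carrier[OF z]] z by (simp, intro eq_vecI) auto
  show "vim (mat_adjoint (Xm s) *\<^sub>v z) = - Im s \<cdot>\<^sub>v vre z + Re s \<cdot>\<^sub>v vim z + W *\<^sub>v (L *\<^sub>v vim z)"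
    unfolding e vim_add[OF d] vim_smult re_mult(2)[OF WLc z]
    using assoc_mult_mat_vec[OF Wc Lc vim_carrier[OF z]] by simp
qed


lemma W_entry: "v \<in> carrier_vec m \<Longrightarrow> i < m \<Longrightarrow> (W *\<^sub>v v) $ i = w i * v $ i"
  unfolding W_def by (simp add: diag_mult_vec)

lemma vre_vim_zero:
  assumes "z \<in> carrier_vec k" "vre z = 0\<^sub>v k" "vim z = 0\<^sub>v k"
  shows "z = 0\<^sub>v k"
proof (rule eq_vecI)
  fix i assume "i < dim_vec (0\<^sub>v k :: complex vec)"
  then have i: "i < k" by simp
  have "Re (z $ i) = 0" "Im (z $ i) = 0"
    using arg_cong[OF assms(2), of "\<lambda>v. v $ i"] arg_cong[OF assms(3), of "\<lambda>v. v $ i"] i assms(1)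
    by (auto simp: vre_def vim_def)
  then show "z $ i = 0\<^sub>v k $ i" using i by (simp add: complex_eq_iff)
qed (use assms in simp)

lemma Xm_kernel:
  assumes s: "Re s = 0" and z: "z \<in> carrier_vec m" and Xz: "Xm s *\<^sub>v z = 0\<^sub>v m"
  shows "z = 0\<^sub>v m"
proof -
  define za where "za = vre z"
  define zb where "zb = vim z"
  define \<omega> where "\<omega> = Im s"
  have za: "za \<in> carrier_vec m" and zb: "zb \<in> carrier_vec m" using z unfolding za_def zb_def by auto
  have Wa: "W *\<^sub>v za \<in> carrier_vec m" using mult_mat_vec_carrier[OF Wc za] .
  have Wb: "W *\<^sub>v zb \<in> carrier_vec m" using mult_mat_vec_carrier[OF Wc zb] .
  have re0: "vre (Xm s *\<^sub>v z) = 0\<^sub>v m" and im0: "vim (Xm s *\<^sub>v z) = 0\<^sub>v m"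
    unfolding Xz by (auto intro!: eq_vecI simp: vre_def vim_def)
  have e1: "L *\<^sub>v (W *\<^sub>v za) = \<omega> \<cdot>\<^sub>v zb"
  proof (rule eq_vecI)
    fix i assume "i < dim_vec (\<omega> \<cdot>\<^sub>v zb)"
    then have i: "i < m" using zb by simp
    have "(Re s \<cdot>\<^sub>v vre z - Im s \<cdot>\<^sub>v vim z + L *\<^sub>v (W *\<^sub>v vre z)) $ i = 0"
      using arg_cong[OF re0, of "\<lambda>v. v $ i"] Xm_vec(1)[OF z, of s] i by simp
    then show "(L *\<^sub>v (W *\<^sub>v za)) $ i = (\<omega> \<cdot>\<^sub>v zb) $ i"
      using i s z unfolding za_def zb_def \<omega>_def by simp
  qed (use zb in simp)
  have e2: "L *\<^sub>v (W *\<^sub>v zb) = (- \<omega>) \<cdot>\<^sub>v za"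
  proof (rule eq_vecI)
    fix i assume "i < dim_vec ((- \<omega>) \<cdot>\<^sub>v za)"
    then have i: "i < m" using za by simp
    have "(Im s \<cdot>\<^sub>v vre z + Re s \<cdot>\<^sub>v vim z + L *\<^sub>v (W *\<^sub>v vim z)) $ i = 0"
      using arg_cong[OF im0, of "\<lambda>v. v $ i"] Xm_vec(2)[OF z, of s] i by simp
    then show "(L *\<^sub>v (W *\<^sub>v zb)) $ i = ((- \<omega>) \<cdot>\<^sub>v za) $ i"
      using i s z unfolding za_def zb_def \<omega>_def by simp
  qed (use za in simp)
  have cr: "(W *\<^sub>v za) \<bullet> zb = (W *\<^sub>v zb) \<bullet> za"
  proof -
    have a: "W *\<^sub>v za = vec m (\<lambda>i. w i * za $ i)" unfolding W_def by (rule diag_mult_vec[OF za])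
    have b: "W *\<^sub>v zb = vec m (\<lambda>i. w i * zb $ i)" unfolding W_def by (rule diag_mult_vec[OF zb])
    show ?thesis unfolding a b using za zb by (simp add: scalar_prod_def algebra_simps)
  qed
  have q1: "(W *\<^sub>v za) \<bullet> (L *\<^sub>v (W *\<^sub>v za)) = \<omega> * ((W *\<^sub>v za) \<bullet> zb)"
    unfolding e1 using Wa zb by (simp add: scalar_prod_smult_distrib[of _ m])
  have q2: "(W *\<^sub>v zb) \<bullet> (L *\<^sub>v (W *\<^sub>v zb)) = - \<omega> * ((W *\<^sub>v zb) \<bullet> za)"
    unfolding e2 using Wb za by (simp add: scalar_prod_smult_distrib[of _ m])
  have sum0: "(W *\<^sub>v za) \<bullet> (L *\<^sub>v (W *\<^sub>v za)) + (W *\<^sub>v zb) \<bullet> (L *\<^sub>v (W *\<^sub>v zb)) = 0"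
    using q1 q2 cr by simp
  have psd: "0 \<le> v \<bullet> (L *\<^sub>v v)" if "v \<in> carrier_vec m" for v
    using L_pd[OF that] by (cases "v = 0\<^sub>v m") (auto simp: mat_vec_zero[OF Lc] less_imp_le)
  have Wa0: "W *\<^sub>v za = 0\<^sub>v m"
  proof (rule ccontr)
    assume "W *\<^sub>v za \<noteq> 0\<^sub>v m"
    from L_pd[OF Wa this] psd[OF Wb] sum0 show False by simp
  qed
  have Wb0: "W *\<^sub>v zb = 0\<^sub>v m"
  proof (rule ccontr)
    assume "W *\<^sub>v zb \<noteq> 0\<^sub>v m"
    from L_pd[OF Wb this] psd[OF Wa] sum0 show False by simp
  qed
  have "za = 0\<^sub>v m" using Winv_W[OF za] Wa0 mat_vec_zero[OF Winvc] by simp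
  moreover have "zb = 0\<^sub>v m" using Winv_W[OF zb] Wb0 mat_vec_zero[OF Winvc] by simp
  ultimately show ?thesis using vre_vim_zero[OF z] unfolding za_def zb_def by simp
qed

lemma P_facts:
  assumes s: "Re s = 0"
  shows "mat_inv (Xm s) \<in> carrier_mat m m" "Xm s * mat_inv (Xm s) = 1\<^sub>m m" "mat_inv (Xm s) * Xm s = 1\<^sub>m m"
proof -
  obtain P where P: "P \<in> carrier_mat m m" "Xm s * P = 1\<^sub>m m" "P * Xm s = 1\<^sub>m m"
    using inv_from_kernel[OF Xmc Xm_kernel[OF s]] by blast
  have "mat_inv (Xm s) = P" by (rule mat_inv_eq[OF Xmc P(1,2)])
  then show "mat_inv (Xm s) \<in> carrier_mat m m" "Xm s * mat_inv (Xm s) = 1\<^sub>m m" "mat_inv (Xm s) * Xm s = 1\<^sub>m m"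
    using P by auto
qed


lemma CBc: "map_mat complex_of_real B \<in> carrier_mat m (n + m)" using Bc by simp

lemma Sigc: "Re s = 0 \<Longrightarrow> Sig s \<in> carrier_mat m (n + m)"
  unfolding Sig_def using P_facts(1) CBc by (metis mult_carrier_mat)

lemma sq_sum_vec: fixes v :: "real vec" assumes "v \<in> carrier_vec m" shows "v \<bullet> v = (\<Sum>i<m. (v $ i)^2)"
proof -
  have "v \<bullet> v = (\<Sum>i<m. v $ i * v $ i)" by (rule sp_sum[OF assms assms])
  also have "\<dots> = (\<Sum>i<m. (v $ i)^2)" by (intro sum.cong refl) (simp add: power2_eq_square)
  finally show ?thesis .
qed

lemma Sig_bound:
  assumes s: "Re s = 0" and u: "u \<in> carrier_vec m"
  shows "cn (mat_adjoint (Sig s) *\<^sub>v u) \<le> U0 * cn u"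
proof -
  define P where "P = mat_inv (Xm s)"
  have Pc: "P \<in> carrier_mat m m" and PX: "P * Xm s = 1\<^sub>m m" using P_facts[OF s] unfolding P_def by auto
  define PH where "PH = mat_adjoint P"
  have PHc: "PH \<in> carrier_mat m m" unfolding PH_def using adj_carrier[OF Pc] .
  define q where "q = PH *\<^sub>v u"
  have qc: "q \<in> carrier_vec m" unfolding q_def using mult_mat_vec_carrier[OF PHc u] .
  define qa where "qa = vre q"
  define qb where "qb = vim q"
  have qa: "qa \<in> carrier_vec m" and qb: "qb \<in> carrier_vec m" using qc unfolding qa_def qb_def by auto
  have BT: "B\<^sup>T \<in> carrier_mat (n + m) m" using Bc by simp
  have CBT: "map_mat complex_of_real B\<^sup>T \<in> carrier_mat (n + m) m" using BT by simp
  have "mat_adjoint (Sig s) = mat_adjoint (map_mat complex_of_real B) * PH"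
    unfolding Sig_def P_def[symmetric] PH_def by (rule adj_mult[OF Pc CBc])
  then have SH: "mat_adjoint (Sig s) *\<^sub>v u = map_mat complex_of_real B\<^sup>T *\<^sub>v q"
    unfolding adj_of_real q_def using assoc_mult_mat_vec[OF CBT PHc u] by simp
  have cnS: "cn (mat_adjoint (Sig s) *\<^sub>v u) = NB qa + NB qb"
    unfolding SH cn_split re_mult[OF BT qc] qa_def[symmetric] qb_def[symmetric]
    using BT_norm[OF qa] BT_norm[OF qb] by simp
  have XH: "mat_adjoint (Xm s) \<in> carrier_mat m m" using adj_carrier[OF Xmc] .
  have uq: "u = mat_adjoint (Xm s) *\<^sub>v q"
  proof -
    have "mat_adjoint (Xm s) *\<^sub>v q = (mat_adjoint (Xm s) * PH) *\<^sub>v u"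
      unfolding q_def using assoc_mult_mat_vec[OF XH PHc u] by simp
    also have "mat_adjoint (Xm s) * PH = mat_adjoint (P * Xm s)" unfolding PH_def by (rule adj_mult[OF Pc Xmc, symmetric])
    also have "\<dots> = 1\<^sub>m m" unfolding PX by (rule adj_one)
    finally show ?thesis using u by simp
  qed
  define \<omega> where "\<omega> = Im s"
  have La: "L *\<^sub>v qa \<in> carrier_vec m" using mult_mat_vec_carrier[OF Lc qa] .
  have Lb: "L *\<^sub>v qb \<in> carrier_vec m" using mult_mat_vec_carrier[OF Lc qb] .
  have ure: "vre u $ i = \<omega> * qb $ i + w i * (L *\<^sub>v qa) $ i" if "i < m" for i
    using arg_cong[OF Xm_adj_vec(1)[OF qc, of s], of "\<lambda>v. v $ i"] uq[symmetric] that s qa qb La W_entry[OF La that]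
    unfolding qa_def[symmetric] qb_def[symmetric] \<omega>_def by simp
  have uim: "vim u $ i = - \<omega> * qa $ i + w i * (L *\<^sub>v qb) $ i" if "i < m" for i
    using arg_cong[OF Xm_adj_vec(2)[OF qc, of s], of "\<lambda>v. v $ i"] uq[symmetric] that s qa qb Lb W_entry[OF Lb that]
    unfolding qa_def[symmetric] qb_def[symmetric] \<omega>_def by simp
  have cnu: "cn u = (\<Sum>i<m. (\<omega> * qb $ i + w i * (L *\<^sub>v qa) $ i)^2 + (- \<omega> * qa $ i + w i * (L *\<^sub>v qb) $ i)^2)"
    unfolding cn_split sq_sum_vec[OF vre_carrier[OF u]] sq_sum_vec[OF vim_carrier[OF u]]
    by (simp add: sum.distrib ure uim)
  show ?thesis unfolding cnS cnu by (rule R1[OF qa qb])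
qed

lemma Sig_upper:
  assumes s: "Re s = 0"
  shows "sigma_max (Sig s) ^ 2 \<le> U0" "0 \<le> sigma_max (Sig s)"
proof -
  have np: "0 < n + m" using n2 by simp
  show "sigma_max (Sig s) ^ 2 \<le> U0"
    by (rule sigma_upper[OF Sigc[OF s] np U0_nonneg Sig_bound[OF s]])
  show "0 \<le> sigma_max (Sig s)" by (rule sigma_props(5)[OF Sigc[OF s] np])
qed


lemma W_Winv: "W * Winv = 1\<^sub>m m"
proof -
  have "W * Winv = mat_diag m (\<lambda>i. w i * (1 / w i))" unfolding W_def Winv_def by (rule mat_diag_diag)
  also have "\<dots> = 1\<^sub>m m" using wpos by (intro eq_matI) (auto simp: mat_diag_def)
  finally show ?thesis .
qed

lemma Sig0: "Sig 0 = map_mat complex_of_real S0"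
proof -
  have X0: "Xm 0 = map_mat complex_of_real (L * W)" unfolding Xm_def using LWc by (intro eq_matI) auto
  have WiLi: "Winv * Linv \<in> carrier_mat m m" using Winvc Linv_facts(1) by (metis mult_carrier_mat)
  have "L * W * (Winv * Linv) = L * (W * (Winv * Linv))" by (rule assoc_mult_mat[OF Lc Wc WiLi])
  also have "W * (Winv * Linv) = (W * Winv) * Linv" by (rule assoc_mult_mat[OF Wc Winvc Linv_facts(1), symmetric])
  also have "\<dots> = Linv" unfolding W_Winv using Linv_facts(1) by simp
  finally have r: "L * W * (Winv * Linv) = 1\<^sub>m m" using Linv_facts(2) by simp
  have "map_mat complex_of_real (L * W) * map_mat complex_of_real (Winv * Linv) = map_mat complex_of_real (L * W * (Winv * Linv))"
    by (rule of_real_hom.mat_hom_mult[OF LWc WiLi, symmetric])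
  also have "\<dots> = 1\<^sub>m m" unfolding r by (rule of_real_hom.mat_hom_one)
  finally have "map_mat complex_of_real (L * W) * map_mat complex_of_real (Winv * Linv) = 1\<^sub>m m" .
  then have inv: "mat_inv (Xm 0) = map_mat complex_of_real (Winv * Linv)"
    unfolding X0 by (intro mat_inv_eq) (use LWc WiLi in simp_all)
  show ?thesis unfolding Sig_def inv S0_def by (rule of_real_hom.mat_hom_mult[OF WiLi Bc, symmetric])
qed

lemma Sig0_lower: "max L1v L2v \<le> sigma_max (Sig 0) ^ 2"
proof -
  have np: "0 < n + m" using n2 by simp
  have S0c': "map_mat complex_of_real S0 \<in> carrier_mat m (n + m)" using S0c by simp
  define T0 where "T0 = {x::real. eigenvalue (mat_adjoint (map_mat complex_of_real S0) * map_mat complex_of_real S0) (complex_of_real x)}"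
  note P = sigma_props[OF S0c' np, folded T0_def]
  define x0 where "x0 = lambda_max G0"
  have "x0 \<le> Max T0"
  proof (cases "x0 > 0")
    case False
    have "0 \<le> Max T0" using P(3)[OF Max_in[OF P(1) P(2)]] .
    then show ?thesis using False by simp
  next
    case True
    obtain u where u: "u \<in> carrier_vec m" "u \<noteq> 0\<^sub>v m" "G0 *\<^sub>v u = x0 \<cdot>\<^sub>v u"
      using G0facts(1) carrier_matD[OF G0c] unfolding eigenvalue_def eigenvector_def x0_def by auto
    have S0T: "S0\<^sup>T \<in> carrier_mat (n + m) m" using S0c by simp
    define v where "v = S0\<^sup>T *\<^sub>v u"
    have vc: "v \<in> carrier_vec (n + m)" unfolding v_def using mult_mat_vec_carrier[OF S0T u(1)] .
    have G0u: "G0 *\<^sub>v u = S0 *\<^sub>v v" unfolding G0_def v_def using assoc_mult_mat_vec[OF S0c S0T u(1)] .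
    have "(S0\<^sup>T * S0) *\<^sub>v v = S0\<^sup>T *\<^sub>v (S0 *\<^sub>v v)" using assoc_mult_mat_vec[OF S0T S0c vc] .
    also have "\<dots> = S0\<^sup>T *\<^sub>v (x0 \<cdot>\<^sub>v u)" using G0u u(3) by simp
    also have "\<dots> = x0 \<cdot>\<^sub>v v" unfolding v_def by (rule mult_mat_vec[OF S0T u(1)])
    finally have ev: "(S0\<^sup>T * S0) *\<^sub>v v = x0 \<cdot>\<^sub>v v" .
    have v0: "v \<noteq> 0\<^sub>v (n + m)"
    proof
      assume "v = 0\<^sub>v (n + m)"
      then have "x0 \<cdot>\<^sub>v u = 0\<^sub>v m" using G0u u(3) mat_vec_zero[OF S0c] by simp
      then have "\<And>i. i < m \<Longrightarrow> x0 * u $ i = 0" using u(1) by (metis index_smult_vec(1) index_zero_vec(1) carrier_vecD)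
      then have "u = 0\<^sub>v m" using True u(1) by (intro eq_vecI) auto
      then show False using u(2) by simp
    qed
    have STS: "S0\<^sup>T * S0 \<in> carrier_mat (n + m) (n + m)" using S0T S0c by (metis mult_carrier_mat)
    have "eigenvalue (S0\<^sup>T * S0) x0" unfolding eigenvalue_def eigenvector_def
      using vc v0 ev STS carrier_matD[OF S0c] by auto
    from of_real_hom.eigenvalue_hom[OF STS this]
    have "eigenvalue (map_mat complex_of_real (S0\<^sup>T * S0)) (complex_of_real x0)" by simp
    moreover have "map_mat complex_of_real (S0\<^sup>T * S0) = mat_adjoint (map_mat complex_of_real S0) * map_mat complex_of_real S0"
      unfolding adj_of_real using of_real_hom.mat_hom_mult[OF S0T S0c] by simp
    ultimately have "x0 \<in> T0" unfolding T0_def by simp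
    then show ?thesis using Max_ge[OF P(1)] by simp
  qed
  then show ?thesis using lower P(4) unfolding x0_def Sig0 by simp
qed

lemma main:
  "max L1v L2v \<le> (hinf_norm (Sigma_tilde n e w \<epsilon> \<sigma>w \<sigma>v))^2 \<and> (hinf_norm (Sigma_tilde n e w \<epsilon> \<sigma>w \<sigma>v))^2 \<le> U0"
proof -
  define f where "f \<omega> = sigma_max (Sig (\<i> * complex_of_real \<omega>))" for \<omega> :: real
  have N: "hinf_norm (Sigma_tilde n e w \<epsilon> \<sigma>w \<sigma>v) = (SUP \<omega>. f \<omega>)"
    unfolding hinf_norm_def f_def Sig_eq ..
  have re: "Re (\<i> * complex_of_real \<omega>) = 0" for \<omega> by simp
  have fb: "f \<omega> \<le> sqrt U0" for \<omega>
  proof -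
    have "f \<omega> ^ 2 \<le> U0" "0 \<le> f \<omega>" unfolding f_def using Sig_upper[OF re] by auto
    then show ?thesis by (metis real_le_rsqrt)
  qed
  have f0: "0 \<le> f \<omega>" for \<omega> unfolding f_def using Sig_upper(2)[OF re] .
  have bdd: "bdd_above (range f)" using fb by (intro bdd_aboveI) auto
  have up: "(SUP \<omega>. f \<omega>) \<le> sqrt U0" by (rule cSUP_least) (use fb in auto)
  have lo: "f 0 \<le> (SUP \<omega>. f \<omega>)" by (rule cSUP_upper[OF _ bdd]) simp
  have f00: "f 0 = sigma_max (Sig 0)" unfolding f_def by simp
  define Nv where "Nv = (SUP \<omega>. f \<omega>)"
  have Nv0: "0 \<le> Nv" using lo f0[of 0] unfolding Nv_def by simp
  have "Nv^2 \<le> (sqrt U0)^2" using up Nv0 unfolding Nv_def by (intro power_mono) auto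
  then have a1: "Nv^2 \<le> U0" using U0_nonneg by simp
  have "(f 0)^2 \<le> Nv^2" using lo f0[of 0] unfolding Nv_def by (intro power_mono) auto
  then have a2: "max L1v L2v \<le> Nv^2" using Sig0_lower f00 by simp
  show ?thesis using a1 a2 N unfolding Nv_def by simp
qed

end

theorem theorem4:
  fixes n :: nat and e :: "nat \<Rightarrow> nat \<times> nat"
    and w \<epsilon> :: "nat \<Rightarrow> real" and \<sigma>w \<sigma>v :: real
  assumes "n \<ge> 2"
    and "is_tree n e"
    and "\<forall>l < n - 1. w l > 0"
    and "\<forall>i < n. \<epsilon> i > 0"
  shows
    "let D = incidence_mat n (n - 1) e;
         Wh = mat_diag (n - 1) (\<lambda>l. sqrt (w l));
         Les = transpose_mat D * mat_diag n (\<lambda>i. 1 / \<epsilon> i) * D;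
         L1 = (\<sigma>w\<^sup>2 + \<sigma>v\<^sup>2 * lambda_min Les * lambda_max Wh ^ 2)
              / (lambda_min Les * lambda_max Wh ^ 4);
         L2 = (\<sigma>w\<^sup>2 + \<sigma>v\<^sup>2 * lambda_max Les * lambda_max Wh * lambda_min Wh)
              / (lambda_max Les * lambda_max Wh ^ 3 * lambda_min Wh);
         U = (\<sigma>w\<^sup>2 + \<sigma>v\<^sup>2 * lambda_min Les * lambda_min Wh ^ 2)
              / (lambda_min Les * lambda_min Wh ^ 4);
         N = hinf_norm (Sigma_tilde n e w \<epsilon> \<sigma>w \<sigma>v)
     in max L1 L2 \<le> N\<^sup>2 \<and> N\<^sup>2 \<le> U"
proof -
  interpret S: sett n e w \<epsilon> \<sigma>w \<sigma>v "n - 1"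
    using assms by unfold_locales auto
  show ?thesis
    using S.main unfolding Let_def S.L1v_def S.L2v_def S.U0_def S.a_def S.b_def S.L_def S.D_def
      S.Wh_def S.Einv_def .
qed


end
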